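(* Let $n>5f$. The convergence algorithm described in the context, executed by $n$ robots of which at most $f$ are Byzantine, in the CORDA model under a fully asynchronous scheduler, is shrinking. That is, there exists $\alpha\in(0,1)$ such that for every time $t$ there is a time $t'>t$ with $$diam\big(U(t')\cup D(t')\big)<\alpha\cdot diam\big(U(t)\cup D(t)\big),$$ where $U(t)$ and $D(t)$ are the multisets of positions and of destinations of the correct robots at time $t$, and $diam(S)=\max S-\min S$.
   Context: Setting: $n$ robots on the real line, at most $f$ Byzantine (arbitrary behaviour, positions chosen by an adversary). Robots are anonymous, oblivious, have no common orientation, and have unlimited visibility with strong multiplicity detection. Correct robots run Look–Compute–Move cycles. In the CORDA model, phases of different robots interleave arbitrarily, so computations may use outdated snapshots. The adversary may stop robot $i$ during a Move only after it has moved at least $\delta_i>0$ toward its destination or reached it. The fully asynchronous scheduler only guarantees that each robot is activated infinitely often. Algorithm: with snapshot sorted $P_1\le\dots\le P_n$ and own position $x_i$, robot $i$ is elected iff $x_i\le P_{f+1}$ or $x_i\ge P_{n-f}$. If elected, it moves toward the midpoint of $\min(x_i,P_{2f+1})$ and $\max(x_i,P_{n-2f})$, which is the center of $trim^i_{2f}(P)$ (remove, among the $2f$ smallest positions, those below $x_i$, and, among the $2f$ largest positions, those above $x_i$). A non-elected robot does not move. The destination of a correct robot at time $t$ is the last destination it computed at or before $t$ (its position if none). *)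

theory Defs
  imports Complex_Main "HOL-Library.Multiset"
begin

text \<open>Time is real, executions start at time 0.
  pos j t is the position of robot j at time t (Byzantine robots: arbitrary).
  For a correct robot i, its k-th Look-Compute-Move cycle has
  Look at time look i k, Compute (and start of Move) at time cmp i k,
  end of Move at time mend i k.\<close>

text \<open>The k-th smallest position (1-indexed) of a sorted snapshot list.\<close>
definition Pk :: "real list \<Rightarrow> nat \<Rightarrow> real" where
  "Pk P k = P ! (k - 1)"

definition algo :: "nat \<Rightarrow> nat \<Rightarrow> real list \<Rightarrow> real \<Rightarrow> real" where
  "algo n f P x =
     (if x \<le> Pk P (f + 1) \<or> x \<ge> Pk P (n - f)
      then (min x (Pk P (2 * f + 1)) + max x (Pk P (n - 2 * f))) / 2
      else x)"

definition snapshot :: "nat \<Rightarrow> (nat \<Rightarrow> real \<Rightarrow> real) \<Rightarrow> real \<Rightarrow> real list" where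
  "snapshot n pos t = sort (map (\<lambda>j. pos j t) [0..<n])"

definition cdest :: "nat \<Rightarrow> nat \<Rightarrow> (nat \<Rightarrow> real \<Rightarrow> real) \<Rightarrow> (nat \<Rightarrow> nat \<Rightarrow> real)
                     \<Rightarrow> nat \<Rightarrow> nat \<Rightarrow> real" where
  "cdest n f pos look i k = algo n f (snapshot n pos (look i k)) (pos i (look i k))"

definition corda_exec ::
  "nat \<Rightarrow> nat \<Rightarrow> nat set \<Rightarrow> (nat \<Rightarrow> real) \<Rightarrow> (nat \<Rightarrow> real \<Rightarrow> real)
   \<Rightarrow> (nat \<Rightarrow> nat \<Rightarrow> real) \<Rightarrow> (nat \<Rightarrow> nat \<Rightarrow> real) \<Rightarrow> (nat \<Rightarrow> nat \<Rightarrow> real) \<Rightarrow> bool" where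
  "corda_exec n f B \<delta> pos look cmp mend \<longleftrightarrow>
    (\<forall>i \<in> {..<n} - B.
       0 < \<delta> i \<and>
       0 \<le> look i 0 \<and>
       (\<forall>k. look i k \<le> cmp i k \<and> cmp i k \<le> mend i k \<and> mend i k \<le> look i (Suc k)) \<and>
       (\<forall>T. \<exists>k. T < look i k) \<and>
       (\<forall>t. 0 \<le> t \<and> t \<le> cmp i 0 \<longrightarrow> pos i t = pos i 0) \<and>
       (\<forall>k t. mend i k \<le> t \<and> t \<le> cmp i (Suc k) \<longrightarrow> pos i t = pos i (mend i k)) \<and>
       (\<forall>k. let s = pos i (cmp i k); d = cdest n f pos look i k in
          (\<exists>lam :: real \<Rightarrow> real. mono_on {cmp i k..mend i k} lam \<and>
             (\<forall>t \<in> {cmp i k..mend i k}. 0 \<le> lam t \<and> lam t \<le> 1 \<and> pos i t = s + lam t * (d - s))) \<and>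
          (pos i (mend i k) = d \<or> \<bar>pos i (mend i k) - s\<bar> \<ge> \<delta> i)))"

definition dest_at :: "nat \<Rightarrow> nat \<Rightarrow> (nat \<Rightarrow> real \<Rightarrow> real) \<Rightarrow> (nat \<Rightarrow> nat \<Rightarrow> real)
                       \<Rightarrow> (nat \<Rightarrow> nat \<Rightarrow> real) \<Rightarrow> nat \<Rightarrow> real \<Rightarrow> real" where
  "dest_at n f pos look cmp i t =
     (if \<exists>k. cmp i k \<le> t then cdest n f pos look i (GREATEST k. cmp i k \<le> t) else pos i t)"

definition U_ms :: "nat \<Rightarrow> nat set \<Rightarrow> (nat \<Rightarrow> real \<Rightarrow> real) \<Rightarrow> real \<Rightarrow> real multiset" where
  "U_ms n B pos t = image_mset (\<lambda>i. pos i t) (mset_set ({..<n} - B))"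

definition D_ms :: "nat \<Rightarrow> nat \<Rightarrow> nat set \<Rightarrow> (nat \<Rightarrow> real \<Rightarrow> real) \<Rightarrow> (nat \<Rightarrow> nat \<Rightarrow> real)
                    \<Rightarrow> (nat \<Rightarrow> nat \<Rightarrow> real) \<Rightarrow> real \<Rightarrow> real multiset" where
  "D_ms n f B pos look cmp t = image_mset (\<lambda>i. dest_at n f pos look cmp i t) (mset_set ({..<n} - B))"

definition diam :: "real multiset \<Rightarrow> real" where
  "diam S = Max (set_mset S) - Min (set_mset S)"

definition diamUD where
  "diamUD n f B pos look cmp t = diam (U_ms n B pos t + D_ms n f B pos look cmp t)"

end

theory Submission
  imports Defs
begin

definition negp :: "(nat \<Rightarrow> real \<Rightarrow> real) \<Rightarrow> nat \<Rightarrow> real \<Rightarrow> real" where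
  "negp pos = (\<lambda>j t. - pos j t)"

locale exe =
  fixes n f :: nat and B :: "nat set" and \<delta> :: "nat \<Rightarrow> real"
    and pos :: "nat \<Rightarrow> real \<Rightarrow> real" and look cmp mend :: "nat \<Rightarrow> nat \<Rightarrow> real"
  assumes nf: "5 * f < n" and Bsub: "B \<subseteq> {..<n}" and cardB: "card B \<le> f"
    and ex: "corda_exec n f B \<delta> pos look cmp mend"
begin

abbreviation "C \<equiv> {..<n} - B"

lemma finC: "finite C" by simp

lemma cardC: "card C = n - card B"
  using Bsub by (simp add: card_Diff_subset finite_subset)

lemma cardC4: "4 * f < card C"
  using cardC cardB nf by linarith

lemma Cne: "C \<noteq> {}"
proof
  assume "C = {}" then have "card C = 0" by simp
  with cardC4 show False by simp
qed

lemma robot: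
  assumes "i \<in> C"
  shows "0 < \<delta> i \<and> 0 \<le> look i 0 \<and>
       (\<forall>k. look i k \<le> cmp i k \<and> cmp i k \<le> mend i k \<and> mend i k \<le> look i (Suc k)) \<and>
       (\<forall>T. \<exists>k. T < look i k) \<and>
       (\<forall>t. 0 \<le> t \<and> t \<le> cmp i 0 \<longrightarrow> pos i t = pos i 0) \<and>
       (\<forall>k t. mend i k \<le> t \<and> t \<le> cmp i (Suc k) \<longrightarrow> pos i t = pos i (mend i k)) \<and>
       (\<forall>k. let s = pos i (cmp i k); d = cdest n f pos look i k in
          (\<exists>lam :: real \<Rightarrow> real. mono_on {cmp i k..mend i k} lam \<and>
             (\<forall>t \<in> {cmp i k..mend i k}. 0 \<le> lam t \<and> lam t \<le> 1 \<and> pos i t = s + lam t * (d - s))) \<and>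
          (pos i (mend i k) = d \<or> \<bar>pos i (mend i k) - s\<bar> \<ge> \<delta> i))"
  using bspec[OF ex[unfolded corda_exec_def] assms] .

lemmas rob_c = robot[THEN conjunct2, THEN conjunct2, THEN conjunct2, THEN conjunct2, THEN conjunct2, THEN conjunct2]

lemma dpos: "i \<in> C \<Longrightarrow> 0 < \<delta> i" using robot[THEN conjunct1] .
lemma look0: "i \<in> C \<Longrightarrow> 0 \<le> look i 0" using robot[THEN conjunct2, THEN conjunct1] .
lemma cyc3: "i \<in> C \<Longrightarrow> look i k \<le> cmp i k \<and> cmp i k \<le> mend i k \<and> mend i k \<le> look i (Suc k)"
  using robot[THEN conjunct2, THEN conjunct2, THEN conjunct1, THEN spec] .
lemma lc: "i \<in> C \<Longrightarrow> look i k \<le> cmp i k" using cyc3 by blast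
lemma cm: "i \<in> C \<Longrightarrow> cmp i k \<le> mend i k" using cyc3 by blast
lemma ml: "i \<in> C \<Longrightarrow> mend i k \<le> look i (Suc k)" using cyc3 by blast
lemma unb: "i \<in> C \<Longrightarrow> \<exists>k. T < look i k"
  using robot[THEN conjunct2, THEN conjunct2, THEN conjunct2, THEN conjunct1, THEN spec] .
lemma init: "i \<in> C \<Longrightarrow> 0 \<le> t \<Longrightarrow> t \<le> cmp i 0 \<Longrightarrow> pos i t = pos i 0"
  using robot[THEN conjunct2, THEN conjunct2, THEN conjunct2, THEN conjunct2, THEN conjunct1, THEN spec] by blast
lemma rest: "i \<in> C \<Longrightarrow> mend i k \<le> t \<Longrightarrow> t \<le> cmp i (Suc k) \<Longrightarrow> pos i t = pos i (mend i k)"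
  using robot[THEN conjunct2, THEN conjunct2, THEN conjunct2, THEN conjunct2, THEN conjunct2, THEN conjunct1, THEN spec, THEN spec] by blast
lemma move: "i \<in> C \<Longrightarrow> \<exists>lam :: real \<Rightarrow> real. mono_on {cmp i k..mend i k} lam \<and>
             (\<forall>t \<in> {cmp i k..mend i k}. 0 \<le> lam t \<and> lam t \<le> 1 \<and>
                pos i t = pos i (cmp i k) + lam t * (cdest n f pos look i k - pos i (cmp i k)))"
  using rob_c[THEN spec[of _ k], unfolded Let_def, THEN conjunct1] .
lemma moveend: "i \<in> C \<Longrightarrow> pos i (mend i k) = cdest n f pos look i k \<or>
     \<bar>pos i (mend i k) - pos i (cmp i k)\<bar> \<ge> \<delta> i"
  using rob_c[THEN spec[of _ k], unfolded Let_def, THEN conjunct2] .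

abbreviation dc where "dc i k \<equiv> cdest n f pos look i k"

lemma lift_mono_gen:
  fixes g :: "nat \<Rightarrow> real"
  shows "(\<And>k. g k \<le> g (Suc k)) \<Longrightarrow> k \<le> k' \<Longrightarrow> g k \<le> g k'"
  by (rule lift_Suc_mono_le)

lemma cmono: assumes i: "i \<in> C" shows "k \<le> k' \<Longrightarrow> cmp i k \<le> cmp i k'"
proof (rule lift_mono_gen[where g="cmp i"])
  fix k show "cmp i k \<le> cmp i (Suc k)" using cm[OF i, of k] ml[OF i, of k] lc[OF i, of "Suc k"] by linarith
qed

lemma lmono: assumes i: "i \<in> C" shows "k \<le> k' \<Longrightarrow> look i k \<le> look i k'"
proof (rule lift_mono_gen[where g="look i"])
  fix k show "look i k \<le> look i (Suc k)" using cm[OF i, of k] ml[OF i, of k] lc[OF i, of k] by linarith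
qed

lemma cmp_look: assumes i: "i \<in> C" and kk: "k < k'" shows "cmp i k \<le> look i k'"
proof -
  have "look i (Suc k) \<le> look i k'" using lmono[OF i] kk by simp
  then show ?thesis using cm[OF i, of k] ml[OF i, of k] by linarith
qed

lemma unbc: assumes i: "i \<in> C" shows "\<exists>k. T < cmp i k"
proof -
  obtain k where "T < look i k" using unb[OF i] by blast
  then have "T < cmp i k" using lc[OF i, of k] by linarith
  then show ?thesis by blast
qed

definition Kc :: "nat \<Rightarrow> real \<Rightarrow> nat" where
  "Kc i t = (LEAST k. t < cmp i k)"

lemma Kc_iff:
  assumes "i \<in> C" shows "cmp i k \<le> t \<longleftrightarrow> k < Kc i t"
proof
  assume "cmp i k \<le> t"
  show "k < Kc i t"
  proof (rule ccontr)
    assume "\<not> k < Kc i t"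
    then have "cmp i (Kc i t) \<le> cmp i k" using cmono[OF assms] by simp
    moreover have "t < cmp i (Kc i t)"
      unfolding Kc_def using unbc[OF assms] by (rule LeastI_ex)
    ultimately show False using \<open>cmp i k \<le> t\<close> by simp
  qed
next
  assume "k < Kc i t"
  then show "cmp i k \<le> t" unfolding Kc_def using not_less_Least by force
qed

lemma Kc_lt: assumes i: "i \<in> C" shows "t < cmp i (Kc i t)"
proof (rule ccontr)
  assume "\<not> t < cmp i (Kc i t)"
  then have "cmp i (Kc i t) \<le> t" by simp
  then show False using Kc_iff[OF i] by simp
qed

lemma Kc_mono:
  assumes i: "i \<in> C" and tt: "t \<le> t'" shows "Kc i t \<le> Kc i t'"
proof (rule ccontr)
  assume "\<not> Kc i t \<le> Kc i t'"
  then have "Kc i t' < Kc i t" by simp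
  then have "cmp i (Kc i t') \<le> t" using Kc_iff[OF i] by simp
  moreover have "t' < cmp i (Kc i t')" by (rule Kc_lt[OF i])
  ultimately show False using tt by simp
qed


lemma dest_at_Kc:
  assumes "i \<in> C"
  shows "dest_at n f pos look cmp i t = (if Kc i t = 0 then pos i t else dc i (Kc i t - 1))"
proof (cases "Kc i t = 0")
  case True
  then have "\<not> (\<exists>k. cmp i k \<le> t)" using Kc_iff[OF assms] by simp
  then show ?thesis using True unfolding dest_at_def by simp
next
  case False
  then have e: "cmp i 0 \<le> t" using Kc_iff[OF assms] by simp
  have "(GREATEST k. cmp i k \<le> t) = Kc i t - 1"
  proof (rule Greatest_equality)
    show "cmp i (Kc i t - 1) \<le> t" using Kc_iff[OF assms] False by simp
    show "\<And>y. cmp i y \<le> t \<Longrightarrow> y \<le> Kc i t - 1" using Kc_iff[OF assms] by fastforce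
  qed
  then show ?thesis using False e unfolding dest_at_def by auto
qed

lemma xcmp: "i \<in> C \<Longrightarrow> pos i (cmp i k) = pos i (look i k)"
proof (cases k)
  case 0
  assume i: "i \<in> C"
  have "0 \<le> cmp i 0" using look0[OF i] lc[OF i, of 0] by linarith
  then have "pos i (cmp i 0) = pos i 0" using init[OF i, of "cmp i 0"] by simp
  moreover have "pos i (look i 0) = pos i 0" using init[OF i, of "look i 0"] look0[OF i] lc[OF i, of 0] by simp
  ultimately show ?thesis using 0 by simp
next
  case (Suc k')
  assume i: "i \<in> C"
  have a: "mend i k' \<le> look i k" "look i k \<le> cmp i k" using Suc ml[OF i, of k'] lc[OF i, of k] by auto
  have "pos i (cmp i k) = pos i (mend i k')" using rest[OF i, of k' "cmp i k"] a Suc by simp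
  moreover have "pos i (look i k) = pos i (mend i k')" using rest[OF i, of k' "look i k"] a Suc by simp
  ultimately show ?thesis by simp
qed

lemma seg:
  fixes s d l l' :: real
  assumes "0 \<le> l" "l \<le> l'" "l' \<le> 1"
  shows "min (s + l*(d-s)) d \<le> s + l'*(d-s) \<and> s + l'*(d-s) \<le> max (s + l*(d-s)) d"
proof (cases "s \<le> d")
  case True
  have h1: "l*(d-s) \<le> l'*(d-s)" using assms True by (intro mult_right_mono) auto
  have h2: "l'*(d-s) \<le> d-s" using mult_right_mono[of l' 1 "d-s"] assms True by simp
  have "s + l*(d-s) \<le> s + l'*(d-s)" using h1 by linarith
  moreover have "s + l'*(d-s) \<le> d" using h2 by linarith
  ultimately show ?thesis by (simp add: min_le_iff_disj le_max_iff_disj)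
next
  case False
  have h1: "l'*(s-d) \<ge> l*(s-d)" using assms False by (intro mult_right_mono) auto
  have h2: "l'*(s-d) \<le> s-d" using mult_right_mono[of l' 1 "s-d"] assms False by simp
  have e1: "l*(d-s) = - (l*(s-d))" "l'*(d-s) = - (l'*(s-d))" by (simp_all add: algebra_simps)
  have "s + l'*(d-s) \<le> s + l*(d-s)" using h1 e1 by linarith
  moreover have "d \<le> s + l'*(d-s)" using h2 e1 by linarith
  ultimately show ?thesis by (simp add: min_le_iff_disj le_max_iff_disj)
qed

lemma span:
  assumes i: "i \<in> C" and h: "cmp i k \<le> t" "t \<le> t'" "t' \<le> cmp i (Suc k)"
  shows "min (pos i t) (dc i k) \<le> pos i t' \<and> pos i t' \<le> max (pos i t) (dc i k)"
proof -
  obtain lam :: "real \<Rightarrow> real" where mo: "mono_on {cmp i k..mend i k} lam"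
    and lp: "\<forall>t \<in> {cmp i k..mend i k}. 0 \<le> lam t \<and> lam t \<le> 1 \<and>
                pos i t = pos i (cmp i k) + lam t * (dc i k - pos i (cmp i k))"
    using move[OF i] by blast
  define s where "s = pos i (cmp i k)"
  define L where "L = (\<lambda>\<tau>. lam (min \<tau> (mend i k)))"
  have cmk: "cmp i k \<le> mend i k" using cm[OF i] .
  have rep: "0 \<le> L \<tau> \<and> L \<tau> \<le> 1 \<and> pos i \<tau> = s + L \<tau> * (dc i k - s)"
    if "cmp i k \<le> \<tau>" "\<tau> \<le> cmp i (Suc k)" for \<tau>
  proof (cases "\<tau> \<le> mend i k")
    case True
    then have "\<tau> \<in> {cmp i k..mend i k}" using that by simp
    then have "0 \<le> lam \<tau> \<and> lam \<tau> \<le> 1 \<and> pos i \<tau> = s + lam \<tau> * (dc i k - s)"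
      using lp unfolding s_def by blast
    moreover have "L \<tau> = lam \<tau>" unfolding L_def using True by simp
    ultimately show ?thesis by simp
  next
    case False
    then have e: "pos i \<tau> = pos i (mend i k)" using rest[OF i, of k \<tau>] that by simp
    have "mend i k \<in> {cmp i k..mend i k}" using cmk by simp
    then have "0 \<le> lam (mend i k) \<and> lam (mend i k) \<le> 1 \<and> pos i (mend i k) = s + lam (mend i k) * (dc i k - s)"
      using lp unfolding s_def by blast
    moreover have "L \<tau> = lam (mend i k)" unfolding L_def using False by simp
    ultimately show ?thesis using e by simp
  qed
  have m1: "min t (mend i k) \<in> {cmp i k..mend i k}" using h cmk by simp
  have m2: "min t' (mend i k) \<in> {cmp i k..mend i k}" using h cmk by simp
  have "min t (mend i k) \<le> min t' (mend i k)" using h by simp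
  then have "L t \<le> L t'" unfolding L_def using mono_onD[OF mo m1 m2] by simp
  moreover have r1: "0 \<le> L t \<and> L t \<le> 1 \<and> pos i t = s + L t * (dc i k - s)" using rep h by simp
  moreover have r2: "0 \<le> L t' \<and> L t' \<le> 1 \<and> pos i t' = s + L t' * (dc i k - s)" using rep h by simp
  ultimately show ?thesis using seg[of "L t" "L t'" s "dc i k"] by simp
qed

lemma init2: assumes i: "i \<in> C" and "0 \<le> t" "t \<le> cmp i 0" shows "pos i t = pos i (look i 0)"
  using init[OF i, of t] init[OF i, of "look i 0"] look0[OF i] lc[OF i, of 0] assms by simp

lemma pend_pos:
  assumes i: "i \<in> C" and t: "0 \<le> t" and l: "look i (Kc i t) \<le> t"
  shows "pos i t = pos i (look i (Kc i t))"
proof -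
  have lt: "t < cmp i (Kc i t)" using Kc_lt[OF i] .
  show ?thesis
  proof (cases "Kc i t")
    case 0
    then show ?thesis using init2[OF i t] lt by simp
  next
    case (Suc K)
    have "pos i t = pos i (mend i K)" using rest[OF i, of K t] ml[OF i, of K] l lt Suc by auto
    moreover have "pos i (look i (Kc i t)) = pos i (mend i K)"
      using rest[OF i, of K "look i (Suc K)"] ml[OF i, of K] lc[OF i] Suc by auto
    ultimately show ?thesis by simp
  qed
qed

lemma cur_span:
  assumes i: "i \<in> C" and K: "Kc i t = Suc K"
  shows "min (pos i (look i K)) (dc i K) \<le> pos i t \<and> pos i t \<le> max (pos i (look i K)) (dc i K)"
proof -
  have "cmp i K \<le> t" using Kc_iff[OF i] K by simp
  moreover have "t \<le> cmp i (Suc K)" using Kc_lt[OF i, of t] K by simp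
  ultimately show ?thesis using span[OF i, of K "cmp i K" t] xcmp[OF i] by simp
qed

lemma next_x:
  assumes i: "i \<in> C"
  shows "min (pos i (look i k)) (dc i k) \<le> pos i (look i (Suc k)) \<and>
         pos i (look i (Suc k)) \<le> max (pos i (look i k)) (dc i k)"
  using span[OF i, of k "cmp i k" "cmp i (Suc k)"] cmono[OF i, of k "Suc k"] xcmp[OF i] by simp

lemma ascend:
  assumes i: "i \<in> C" and up: "pos i (look i k) \<le> dc i k"
  shows "min (dc i k) (pos i (look i k) + \<delta> i) \<le> pos i (look i (Suc k))"
proof -
  have sp: "min (pos i (cmp i k)) (dc i k) \<le> pos i (mend i k) \<and> pos i (mend i k) \<le> max (pos i (cmp i k)) (dc i k)"
  proof -
    have "mend i k \<le> cmp i (Suc k)" using ml[OF i, of k] lc[OF i, of "Suc k"] by linarith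
    then show ?thesis using span[OF i, of k "cmp i k" "mend i k"] cm[OF i, of k] by simp
  qed
  have e: "pos i (look i (Suc k)) = pos i (mend i k)"
    using rest[OF i, of k "look i (Suc k)"] ml[OF i] lc[OF i] by simp
  have "pos i (mend i k) = dc i k \<or> \<bar>pos i (mend i k) - pos i (cmp i k)\<bar> \<ge> \<delta> i" using moveend[OF i] .
  then show ?thesis using sp e up xcmp[OF i, of k] by auto
qed

end

lemma sorted_nth_less_iff:
  fixes P :: "real list"
  shows "sorted P \<Longrightarrow> i < length P \<Longrightarrow> (P ! i < y \<longleftrightarrow> i < length (filter (\<lambda>v. v < y) P))"
proof (induction P arbitrary: i)
  case Nil then show ?case by simp
next
  case (Cons a P)
  show ?case
  proof (cases "a < y")
    case True
    show ?thesis
    proof (cases i)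
      case 0 then show ?thesis using True by simp
    next
      case (Suc j)
      then show ?thesis using Cons True by simp
    qed
  next
    case False
    have all: "\<forall>v\<in>set (a#P). a \<le> v" using Cons.prems(1) by auto
    then have "filter (\<lambda>v. v < y) (a#P) = []" using False by (auto simp: filter_empty_conv)
    moreover have "(a#P) ! i \<ge> a" using all Cons.prems(2) nth_mem by blast
    ultimately show ?thesis using False by simp
  qed
qed

lemma sorted_nth_le_iff:
  fixes P :: "real list"
  shows "sorted P \<Longrightarrow> i < length P \<Longrightarrow> (P ! i \<le> y \<longleftrightarrow> i < length (filter (\<lambda>v. v \<le> y) P))"
proof (induction P arbitrary: i)
  case Nil then show ?case by simp
next
  case (Cons a P)
  show ?case
  proof (cases "a \<le> y")
    case True
    show ?thesis
    proof (cases i)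
      case 0 then show ?thesis using True by simp
    next
      case (Suc j)
      then show ?thesis using Cons True by simp
    qed
  next
    case False
    have all: "\<forall>v\<in>set (a#P). a \<le> v" using Cons.prems(1) by auto
    then have "filter (\<lambda>v. v \<le> y) (a#P) = []" using False by (auto simp: filter_empty_conv)
    moreover have "(a#P) ! i \<ge> a" using all Cons.prems(2) nth_mem by blast
    ultimately show ?thesis using False by simp
  qed
qed

lemma len_filter_snap:
  "length (filter Q (snapshot n pos t)) = card {j. j < n \<and> Q (pos j t)}"
proof -
  have "length (filter Q (snapshot n pos t)) = length (filter Q (map (\<lambda>j. pos j t) [0..<n]))"
    unfolding snapshot_def by (simp add: filter_sort)
  also have "\<dots> = length (filter (\<lambda>j. Q (pos j t)) [0..<n])"
    by (simp add: filter_map comp_def)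
  also have "\<dots> = card {j. j < n \<and> Q (pos j t)}"
  proof -
    have "{i. i < n \<and> Q (pos ([0..<n] ! i) t)} = {j. j < n \<and> Q (pos j t)}" by auto
    then show ?thesis by (simp add: length_filter_conv_card)
  qed
  finally show ?thesis .
qed

lemma snap_len: "length (snapshot n pos t) = n" unfolding snapshot_def by simp
lemma snap_sorted: "sorted (snapshot n pos t)" unfolding snapshot_def by simp

lemma Pk_lt:
  assumes "1 \<le> k" "k \<le> n"
  shows "Pk (snapshot n pos t) k < y \<longleftrightarrow> k \<le> card {j. j < n \<and> pos j t < y}"
  using sorted_nth_less_iff[OF snap_sorted, of "k-1" n pos t y] len_filter_snap[of "\<lambda>v. v < y" n pos t]
    snap_len[of n pos t] assms unfolding Pk_def by auto

lemma Pk_le: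
  assumes "1 \<le> k" "k \<le> n"
  shows "Pk (snapshot n pos t) k \<le> y \<longleftrightarrow> k \<le> card {j. j < n \<and> pos j t \<le> y}"
  using sorted_nth_le_iff[OF snap_sorted, of "k-1" n pos t y] len_filter_snap[of "\<lambda>v. v \<le> y" n pos t]
    snap_len[of n pos t] assms unfolding Pk_def by auto

lemma algo_DE: "(x + min x (Pk P (2*f+1)))/2 \<le> algo n f P x"
proof -
  have "(x + min x (Pk P (2*f+1)))/2 \<le> (min x (Pk P (2 * f + 1)) + max x (Pk P (n - 2 * f))) / 2"
    by (simp add: add.commute)
  moreover have "(x + min x (Pk P (2*f+1)))/2 \<le> x" by simp
  ultimately show ?thesis unfolding algo_def by simp
qed

lemma algo_DB:
  assumes nf: "5*f < n" and c: "card {j. j<n \<and> pos j t < x} \<le> f"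
  shows "x \<le> algo n f (snapshot n pos t) x \<and>
         (x + Pk (snapshot n pos t) (n-2*f))/2 \<le> algo n f (snapshot n pos t) x"
proof -
  let ?P = "snapshot n pos t"
  have e: "x \<le> Pk ?P (f+1)" using Pk_lt[of "f+1" n pos t x] nf c by linarith
  have r: "x \<le> Pk ?P (2*f+1)" using Pk_lt[of "2*f+1" n pos t x] nf c by linarith
  have "algo n f ?P x = (x + max x (Pk ?P (n - 2 * f))) / 2"
    unfolding algo_def using e r by (simp add: min_def)
  then show ?thesis by simp
qed

lemma algo_DC:
  assumes nf: "5*f < n" and c: "card {j. j<n \<and> pos j t \<le> x} < n - f"
  shows "x \<le> algo n f (snapshot n pos t) x"
proof -
  let ?P = "snapshot n pos t"
  have h: "\<not> Pk ?P (n-f) \<le> x" using Pk_le[of "n-f" n pos t x] nf c by simp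
  show ?thesis
  proof (cases "x \<le> Pk ?P (f+1)")
    case True
    then have "card {j. j<n \<and> pos j t < x} \<le> f" using Pk_lt[of "f+1" n pos t x] nf by linarith
    then show ?thesis using algo_DB[OF nf] by blast
  next
    case False
    then show ?thesis using h unfolding algo_def by simp
  qed
qed

lemma algo_DF:
  assumes nf: "5*f < n" and c: "f < card {j. j<n \<and> pos j t < x}"
  shows "algo n f (snapshot n pos t) x \<le> x"
proof -
  let ?P = "snapshot n pos t"
  have h: "Pk ?P (f+1) < x" using Pk_lt[of "f+1" n pos t x] nf c by simp
  show ?thesis
  proof (cases "Pk ?P (n-f) \<le> x")
    case True
    then have "n - f \<le> card {j. j<n \<and> pos j t \<le> x}" using Pk_le[of "n-f" n pos t x] nf by simp
    then have "Pk ?P (n-2*f) \<le> x" using Pk_le[of "n-2*f" n pos t x] nf by simp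
    then have "algo n f ?P x = (min x (Pk ?P (2 * f + 1)) + x) / 2"
      unfolding algo_def using True by (simp add: max_def)
    then show ?thesis by simp
  next
    case False
    then show ?thesis using h unfolding algo_def by simp
  qed
qed

lemma algo_DN:
  assumes nf: "5*f < n" and c1: "f < card {j. j<n \<and> pos j t < x}"
    and c2: "card {j. j<n \<and> pos j t \<le> x} < n - f"
  shows "algo n f (snapshot n pos t) x = x"
  using algo_DF[of f n pos t x] algo_DC[of f n pos t x] nf c1 c2 by simp

lemma R_ge:
  assumes nf: "5*f < n" and c: "card {j. j<n \<and> pos j t < y} \<le> 2*f"
  shows "y \<le> Pk (snapshot n pos t) (2*f+1)"
  using Pk_lt[of "2*f+1" n pos t y] nf c by linarith

lemma Q_ge:
  assumes nf: "5*f < n" and c: "card {j. j<n \<and> pos j t < y} < n - 2*f"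
  shows "y \<le> Pk (snapshot n pos t) (n-2*f)"
  using Pk_lt[of "n-2*f" n pos t y] nf c by linarith

lemma Q_lt:
  assumes nf: "5*f < n" and c: "Pk (snapshot n pos t) (n-2*f) < y"
  shows "n - 2*f \<le> card {j. j<n \<and> pos j t < y}"
  using Pk_lt[of "n-2*f" n pos t y] nf c by simp


context exe
begin

definition pend :: "nat \<Rightarrow> real \<Rightarrow> real" where
  "pend i t = (if look i (Kc i t) \<le> t then dc i (Kc i t) else pos i t)"

definition lowv :: "nat \<Rightarrow> real \<Rightarrow> real" where
  "lowv i t = min (pos i t) (min (dest_at n f pos look cmp i t) (pend i t))"

lemma lowv_ge_iff: "v \<le> lowv i t \<longleftrightarrow> v \<le> pos i t \<and> v \<le> dest_at n f pos look cmp i t \<and> v \<le> pend i t"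
  unfolding lowv_def by simp

lemma lowv_pos: "lowv i t \<le> pos i t" unfolding lowv_def by simp
lemma lowv_dest: "lowv i t \<le> dest_at n f pos look cmp i t" unfolding lowv_def by simp

lemma lowv_cyc:
  assumes i: "i \<in> C" and t: "0 \<le> t" and v: "v \<le> lowv i t"
  shows "v \<le> pos i (look i (Kc i t)) \<and> (look i (Kc i t) \<le> t \<longrightarrow> v \<le> dc i (Kc i t))"
proof (cases "look i (Kc i t) \<le> t")
  case True
  then show ?thesis using pend_pos[OF i t True] v unfolding lowv_ge_iff pend_def by simp
next
  case False
  have lt: "t < cmp i (Kc i t)" using Kc_lt[OF i] .
  show ?thesis
  proof (cases "Kc i t")
    case 0
    then have "pos i t = pos i (look i 0)" using init2[OF i t] lt by simp
    then show ?thesis using v False 0 lowv_pos[of i t] by simp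
  next
    case (Suc K)
    have a: "cmp i K \<le> t" using Kc_iff[OF i] Suc by simp
    have b: "look i (Kc i t) \<le> cmp i (Suc K)" using lc[OF i] Suc by simp
    have "min (pos i t) (dc i K) \<le> pos i (look i (Kc i t))"
      using span[OF i a, of "look i (Kc i t)"] False b Suc by simp
    moreover have "dest_at n f pos look cmp i t = dc i K" using dest_at_Kc[OF i] Suc by simp
    ultimately show ?thesis using v False unfolding lowv_ge_iff by (auto simp: min_le_iff_disj)
  qed
qed

lemma cyc_ind:
  assumes i: "i \<in> C" and x0: "v \<le> pos i (look i k0)"
    and st: "\<And>k. k0 \<le> k \<Longrightarrow> v \<le> pos i (look i k) \<Longrightarrow> v \<le> dc i k"
  shows "k0 \<le> k \<Longrightarrow> v \<le> pos i (look i k) \<and> v \<le> dc i k"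
proof (induction k rule: dec_induct)
  case base then show ?case using x0 st by simp
next
  case (step k)
  then have "v \<le> pos i (look i (Suc k))" using next_x[OF i, of k] by (auto simp: min_le_iff_disj)
  then show ?case using st step by simp
qed

lemma lowv_from:
  assumes i: "i \<in> C" and T: "0 \<le> T" and lv: "v \<le> lowv i T"
    and cy: "\<And>k. Kc i T \<le> k \<Longrightarrow> v \<le> pos i (look i k) \<and> v \<le> dc i k" and tT: "T \<le> t"
  shows "v \<le> lowv i t"
proof -
  have t0: "0 \<le> t" using T tT by simp
  have KK: "Kc i T \<le> Kc i t" using Kc_mono[OF i tT] .
  have pe: "v \<le> pend i t"
  proof (cases "look i (Kc i t) \<le> t")
    case True then show ?thesis unfolding pend_def using cy KK by simp
  next
    case False
    then have "pend i t = pos i t" unfolding pend_def by simp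
    moreover have "v \<le> pos i t"
    proof (cases "Kc i t")
      case 0
      then have "pos i t = pos i (look i 0)" using init2[OF i t0] Kc_lt[OF i, of t] by simp
      then show ?thesis using cy[of 0] KK 0 by simp
    next
      case (Suc K)
      show ?thesis
      proof (cases "Kc i T \<le> K")
        case True
        then show ?thesis using cur_span[OF i Suc] cy[of K] by (auto simp: min_le_iff_disj)
      next
        case False
        then have KT: "Kc i T = Suc K" using KK Suc by simp
        have a: "cmp i K \<le> T" using Kc_iff[OF i] KT by simp
        have b: "t \<le> cmp i (Suc K)" using Kc_lt[OF i, of t] Suc by simp
        have "min (pos i T) (dc i K) \<le> pos i t" using span[OF i a tT b] by simp
        moreover have "dest_at n f pos look cmp i T = dc i K" using dest_at_Kc[OF i] KT by simp
        ultimately show ?thesis using lv unfolding lowv_ge_iff by (auto simp: min_le_iff_disj)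
      qed
    qed
    ultimately show ?thesis by simp
  qed
  have po: "v \<le> pos i t"
  proof (cases "Kc i t")
    case 0
    then have "pos i t = pos i (look i 0)" using init2[OF i t0] Kc_lt[OF i, of t] by simp
    then show ?thesis using cy[of 0] KK 0 by simp
  next
    case (Suc K)
    show ?thesis
    proof (cases "Kc i T \<le> K")
      case True
      then show ?thesis using cur_span[OF i Suc] cy[of K] by (auto simp: min_le_iff_disj)
    next
      case False
      then have KT: "Kc i T = Suc K" using KK Suc by simp
      have a: "cmp i K \<le> T" using Kc_iff[OF i] KT by simp
      have b: "t \<le> cmp i (Suc K)" using Kc_lt[OF i, of t] Suc by simp
      have "min (pos i T) (dc i K) \<le> pos i t" using span[OF i a tT b] by simp
      moreover have "dest_at n f pos look cmp i T = dc i K" using dest_at_Kc[OF i] KT by simp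
      ultimately show ?thesis using lv unfolding lowv_ge_iff by (auto simp: min_le_iff_disj)
    qed
  qed
  have de: "v \<le> dest_at n f pos look cmp i t"
  proof (cases "Kc i t")
    case 0 then show ?thesis using po dest_at_Kc[OF i] by simp
  next
    case (Suc K)
    then have e: "dest_at n f pos look cmp i t = dc i K" using dest_at_Kc[OF i] by simp
    show ?thesis
    proof (cases "Kc i T \<le> K")
      case True then show ?thesis using e cy[of K] by simp
    next
      case False
      then have KT: "Kc i T = Suc K" using KK Suc by simp
      have "dest_at n f pos look cmp i T = dc i K" using dest_at_Kc[OF i] KT by simp
      then show ?thesis using e lv unfolding lowv_ge_iff by simp
    qed
  qed
  show ?thesis using po de pe unfolding lowv_ge_iff by simp
qed

lemma lowv_after:
  assumes i: "i \<in> C" and cy: "\<And>k. k0 \<le> k \<Longrightarrow> v \<le> pos i (look i k) \<and> v \<le> dc i k"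
    and t: "cmp i k0 \<le> t"
  shows "v \<le> lowv i t"
proof -
  have K: "k0 < Kc i t" using Kc_iff[OF i] t by simp
  then obtain K where KS: "Kc i t = Suc K" and kK: "k0 \<le> K" by (cases "Kc i t") auto
  have po: "v \<le> pos i t" using cur_span[OF i KS] cy[OF kK] by (auto simp: min_le_iff_disj)
  have de: "v \<le> dest_at n f pos look cmp i t" using dest_at_Kc[OF i] KS cy[OF kK] by simp
  have pe: "v \<le> pend i t" unfolding pend_def using po cy[of "Kc i t"] K by simp
  show ?thesis using po de pe unfolding lowv_ge_iff by simp
qed

lemma pos_bound:
  assumes i: "i \<in> C" and T: "0 \<le> T" and lv: "v \<le> lowv i T" and tT: "T < t"
    and good: "\<And>k. Kc i T \<le> k \<Longrightarrow> look i k < t \<Longrightarrow> v \<le> dc i k"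
  shows "v \<le> pos i t"
proof -
  let ?K0 = "Kc i T"
  have x0: "v \<le> pos i (look i ?K0)" using lowv_cyc[OF i T lv] by simp
  have Q: "v \<le> pos i (look i k)" if "?K0 \<le> k" "look i k \<le> t" for k
    using that
  proof (induction k rule: dec_induct)
    case base then show ?case using x0 by simp
  next
    case (step k)
    have lk: "look i k \<le> t" using lmono[OF i, of k "Suc k"] step.prems by simp
    then have IH: "v \<le> pos i (look i k)" using step.IH by simp
    show ?case
    proof (cases "look i k < t")
      case True
      then have "v \<le> dc i k" using good step.hyps by simp
      then show ?thesis using next_x[OF i, of k] IH by (auto simp: min_le_iff_disj)
    next
      case False
      then have "look i k = t" using lk by simp
      moreover have "look i k \<le> look i (Suc k)" using lmono[OF i] by simp
      ultimately have "look i (Suc k) = look i k" using step.prems by simp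
      then show ?thesis using IH by simp
    qed
  qed
  have KK: "?K0 \<le> Kc i t" using Kc_mono[OF i] tT by simp
  have t0: "0 \<le> t" using T tT by simp
  show ?thesis
  proof (cases "Kc i t")
    case 0
    then have "pos i t = pos i (look i 0)" using init2[OF i t0] Kc_lt[OF i, of t] by simp
    moreover have "?K0 = 0" using KK 0 by simp
    ultimately show ?thesis using x0 by simp
  next
    case (Suc K)
    show ?thesis
    proof (cases "?K0 \<le> K")
      case True
      have ck: "cmp i K \<le> t" using Kc_iff[OF i] Suc by simp
      then have lkt: "look i K \<le> t" using lc[OF i, of K] by simp
      show ?thesis
      proof (cases "look i K < t")
        case True
        then have "v \<le> dc i K" using good \<open>?K0 \<le> K\<close> by simp
        then show ?thesis using cur_span[OF i Suc] Q[OF \<open>?K0 \<le> K\<close> lkt] by (auto simp: min_le_iff_disj)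
      next
        case False
        then have "look i K = t" using lkt by simp
        then have "cmp i K = t" using lc[OF i, of K] ck by simp
        then have "pos i t = pos i (look i K)" using xcmp[OF i, of K] by simp
        then show ?thesis using Q[OF \<open>?K0 \<le> K\<close> lkt] by simp
      qed
    next
      case False
      then have KT: "?K0 = Suc K" using KK Suc by simp
      have a: "cmp i K \<le> T" using Kc_iff[OF i] KT by simp
      have b: "t \<le> cmp i (Suc K)" using Kc_lt[OF i, of t] Suc by simp
      have "min (pos i T) (dc i K) \<le> pos i t" using span[OF i a _ b] tT by simp
      moreover have "dest_at n f pos look cmp i T = dc i K" using dest_at_Kc[OF i] KT by simp
      ultimately show ?thesis using lv unfolding lowv_ge_iff by (auto simp: min_le_iff_disj)
    qed
  qed
qed

end

context exe
begin

lemma look_nn: "i \<in> C \<Longrightarrow> 0 \<le> look i k"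
  using look0 lmono by (meson le0 order_trans)

lemma cmp_nn: "i \<in> C \<Longrightarrow> 0 \<le> cmp i k"
  using look_nn lc by (meson order_trans)

lemma cdest_eq: "dc i k = algo n f (snapshot n pos (look i k)) (pos i (look i k))"
  by (simp add: cdest_def)

lemma fin_looks: assumes i: "i \<in> C" shows "finite {k. look i k \<le> L}"
proof -
  obtain k' where k': "L < look i k'" using unb[OF i] by blast
  have "{k. look i k \<le> L} \<subseteq> {..<k'}"
  proof
    fix k assume "k \<in> {k. look i k \<le> L}"
    then have "look i k \<le> L" by simp
    then show "k \<in> {..<k'}" using lmono[OF i, of k' k] k' by (cases "k' \<le> k") auto
  qed
  then show ?thesis by (rule finite_subset) simp
qed

lemma ginv:
  assumes S: "S \<subseteq> C" and T: "0 \<le> T" and st: "\<And>j. j \<in> S \<Longrightarrow> \<theta> j \<le> lowv j T"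
    and step: "\<And>i k. i \<in> S \<Longrightarrow> T < look i k \<Longrightarrow> (\<And>j. j \<in> S \<Longrightarrow> \<theta> j \<le> pos j (look i k)) \<Longrightarrow> \<theta> i \<le> dc i k"
    and iS: "i \<in> S" and tT: "T \<le> t"
  shows "\<theta> i \<le> lowv i t"
proof -
  have claim: "\<forall>i\<in>S. \<forall>k. Kc i T \<le> k \<longrightarrow> \<theta> i \<le> dc i k"
  proof (rule ccontr)
    assume "\<not> (\<forall>i\<in>S. \<forall>k. Kc i T \<le> k \<longrightarrow> \<theta> i \<le> dc i k)"
    then obtain i1 k1 where i1: "i1 \<in> S" "Kc i1 T \<le> k1" "dc i1 k1 < \<theta> i1" by force
    define L where "L = look i1 k1"
    define A where "A = {(i,k). i \<in> S \<and> Kc i T \<le> k \<and> dc i k < \<theta> i \<and> look i k \<le> L}"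
    have "A \<subseteq> Sigma S (\<lambda>i. {k. look i k \<le> L})" unfolding A_def by auto
    moreover have "finite (Sigma S (\<lambda>i. {k. look i k \<le> L}))"
      using S finite_subset[OF S finC] fin_looks by (intro finite_SigmaI) auto
    ultimately have finA: "finite A" by (rule finite_subset)
    have inA: "(i1,k1) \<in> A" unfolding A_def L_def using i1 by simp
    define g where "g = (\<lambda>p. look (fst p) (snd p))"
    have "finite (g ` A)" "g ` A \<noteq> {}" using finA inA by auto
    then have "Min (g ` A) \<in> g ` A" by (rule Min_in)
    then obtain p where p: "p \<in> A" "g p = Min (g ` A)" by auto
    obtain i k where ik: "p = (i,k)" by (cases p)
    have pA: "i \<in> S" "Kc i T \<le> k" "dc i k < \<theta> i" "look i k \<le> L" using p ik unfolding A_def by auto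
    have iC: "i \<in> C" using pA S by auto
    have minl: "look i k \<le> look j k'" if "j \<in> S" "Kc j T \<le> k'" "dc j k' < \<theta> j" for j k'
    proof (cases "look j k' \<le> L")
      case True
      then have "(j,k') \<in> A" unfolding A_def using that by simp
      then have "Min (g ` A) \<le> g (j,k')" using \<open>finite (g ` A)\<close> by simp
      then show ?thesis using p ik unfolding g_def by simp
    next
      case False then show ?thesis using pA by simp
    qed
    show False
    proof (cases "look i k \<le> T")
      case True
      have kK: "k = Kc i T"
      proof (rule ccontr)
        assume "k \<noteq> Kc i T"
        then have "Kc i T < k" using pA by simp
        then have "cmp i (Kc i T) \<le> look i k" using cmp_look[OF iC] by simp
        moreover have "T < cmp i (Kc i T)" using Kc_lt[OF iC] .
        ultimately show False using True by simp
      qed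
      have "\<theta> i \<le> dc i (Kc i T)" using lowv_cyc[OF iC T st[OF pA(1)]] True kK by simp
      then show False using pA kK by simp
    next
      case False
      have "\<theta> j \<le> pos j (look i k)" if jS: "j \<in> S" for j
      proof -
        have jC: "j \<in> C" using jS S by auto
        show ?thesis
        proof (rule pos_bound[OF jC T st[OF jS]])
          show "T < look i k" using False by simp
          fix k' assume "Kc j T \<le> k'" "look j k' < look i k"
          then show "\<theta> j \<le> dc j k'" using minl[OF jS] by force
        qed
      qed
      then have "\<theta> i \<le> dc i k" using step[OF pA(1)] False by simp
      then show False using pA by simp
    qed
  qed
  have iC: "i \<in> C" using iS S by auto
  have cy: "\<theta> i \<le> pos i (look i k) \<and> \<theta> i \<le> dc i k" if "Kc i T \<le> k" for k
  proof (rule cyc_ind[OF iC, of "\<theta> i" "Kc i T" k])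
    show "\<theta> i \<le> pos i (look i (Kc i T))" using lowv_cyc[OF iC T st[OF iS]] by simp
    show "\<And>k. Kc i T \<le> k \<Longrightarrow> \<theta> i \<le> pos i (look i k) \<Longrightarrow> \<theta> i \<le> dc i k" using claim iS by simp
    show "Kc i T \<le> k" using that .
  qed
  show ?thesis by (rule lowv_from[OF iC T st[OF iS] cy tT])
qed

lemma frozen:
  assumes i: "i \<in> C" and fr: "\<And>k. k1 \<le> k \<Longrightarrow> dc i k = pos i (look i k)" and t: "cmp i k1 \<le> t"
  shows "pos i t = pos i (look i k1) \<and> lowv i t = pos i (look i k1)"
proof -
  have xs: "pos i (look i k) = pos i (look i k1)" if "k1 \<le> k" for k
    using that
  proof (induction k rule: dec_induct)
    case base then show ?case by simp
  next
    case (step k)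
    then have "dc i k = pos i (look i k)" using fr by simp
    then have "pos i (look i (Suc k)) = pos i (look i k)" using next_x[OF i, of k] by simp
    then show ?case using step by simp
  qed
  have K: "k1 < Kc i t" using Kc_iff[OF i] t by simp
  then obtain K where KS: "Kc i t = Suc K" and kK: "k1 \<le> K" by (cases "Kc i t") auto
  have dK: "dc i K = pos i (look i k1)" using fr[OF kK] xs[OF kK] by simp
  have po: "pos i t = pos i (look i k1)" using cur_span[OF i KS] dK xs[OF kK] by simp
  have de: "dest_at n f pos look cmp i t = pos i (look i k1)" using dest_at_Kc[OF i] KS dK by simp
  have pe: "pend i t = pos i (look i k1)" unfolding pend_def using po fr[of "Kc i t"] xs[of "Kc i t"] K by simp
  show ?thesis using po de pe unfolding lowv_def by simp
qed

lemma asc_only: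
  assumes i: "i \<in> C" and up: "\<And>k. k1 \<le> k \<Longrightarrow> pos i (look i k) \<le> dc i k" and t: "cmp i k1 \<le> t"
  shows "lowv i t = pos i t"
proof -
  have t0: "0 \<le> t" using cmp_nn[OF i, of k1] t by simp
  have K: "k1 < Kc i t" using Kc_iff[OF i] t by simp
  then obtain K where KS: "Kc i t = Suc K" and kK: "k1 \<le> K" by (cases "Kc i t") auto
  have "pos i t \<le> dc i K" using cur_span[OF i KS] up[OF kK] by (auto simp: le_max_iff_disj)
  then have de: "pos i t \<le> dest_at n f pos look cmp i t" using dest_at_Kc[OF i] KS by simp
  have pe: "pos i t \<le> pend i t"
  proof (cases "look i (Kc i t) \<le> t")
    case True
    then have "pos i t = pos i (look i (Kc i t))" using pend_pos[OF i t0] by simp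
    then show ?thesis unfolding pend_def using True up[of "Kc i t"] K by simp
  next
    case False then show ?thesis unfolding pend_def by simp
  qed
  show ?thesis using de pe unfolding lowv_def by simp
qed

lemma cnt_byz: "card {j. j < n \<and> pos j t < y} \<le> f + card {j \<in> C. pos j t < y}"
proof -
  have "{j. j < n \<and> pos j t < y} \<subseteq> B \<union> {j \<in> C. pos j t < y}" by auto
  then have "card {j. j < n \<and> pos j t < y} \<le> card (B \<union> {j \<in> C. pos j t < y})"
    using Bsub by (intro card_mono) (auto intro: finite_subset)
  also have "\<dots> \<le> card B + card {j \<in> C. pos j t < y}" by (rule card_Un_le)
  finally show ?thesis using cardB by simp
qed

lemma cnt_corr: "card {j \<in> C. pos j t < y} \<le> card {j. j < n \<and> pos j t < y}"
  by (rule card_mono) auto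

lemma cnt_gt: "card {j \<in> C. x < pos j t} \<le> n - card {j. j < n \<and> pos j t \<le> x}"
proof -
  have d: "{j. j < n \<and> pos j t \<le> x} \<inter> {j \<in> C. x < pos j t} = {}" by auto
  have u: "{j. j < n \<and> pos j t \<le> x} \<union> {j \<in> C. x < pos j t} \<subseteq> {..<n}" by auto
  have "card {j. j < n \<and> pos j t \<le> x} + card {j \<in> C. x < pos j t}
      = card ({j. j < n \<and> pos j t \<le> x} \<union> {j \<in> C. x < pos j t})"
    using d by (intro card_Un_disjoint[symmetric]) auto
  also have "\<dots> \<le> n" using card_mono[OF _ u] by simp
  finally show ?thesis by simp
qed

lemma cnt_lowest:
  assumes "\<And>j. j < n \<Longrightarrow> pos j t < x \<Longrightarrow> j \<in> B"
  shows "card {j. j < n \<and> pos j t < x} \<le> f"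
proof -
  have "{j. j < n \<and> pos j t < x} \<subseteq> B" using assms by auto
  then have "card {j. j < n \<and> pos j t < x} \<le> card B" using Bsub by (intro card_mono) (auto intro: finite_subset)
  then show ?thesis using cardB by simp
qed

end


lemma sorted_rev_neg:
  fixes P :: "real list"
  shows "sorted P \<Longrightarrow> sorted (rev (map uminus P))"
  by (simp add: sorted_wrt_rev sorted_wrt_map)

lemma snapshot_neg: "snapshot n (negp pos) t = rev (map uminus (snapshot n pos t))"
proof -
  have "sort (map (\<lambda>j. - pos j t) [0..<n]) = rev (map uminus (sort (map (\<lambda>j. pos j t) [0..<n])))"
  proof (rule properties_for_sort)
    show "mset (rev (map uminus (sort (map (\<lambda>j. pos j t) [0..<n])))) = mset (map (\<lambda>j. - pos j t) [0..<n])"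
      by (simp add: mset_map image_mset.compositionality comp_def)
    show "sorted (rev (map uminus (sort (map (\<lambda>j. pos j t) [0..<n]))))"
      by (rule sorted_rev_neg) simp
  qed
  then show ?thesis unfolding snapshot_def negp_def by simp
qed

lemma Pk_neg:
  assumes "length P = n" "1 \<le> k" "k \<le> n"
  shows "Pk (rev (map uminus P)) k = - Pk P (n + 1 - k)"
  using assms unfolding Pk_def by (simp add: rev_nth)

lemma algo_neg:
  assumes nf: "5*f < n" and len: "length P = n"
  shows "algo n f (rev (map uminus P)) (-x) = - algo n f P x"
proof -
  have a: "Pk (rev (map uminus P)) (f+1) = - Pk P (n-f)" using Pk_neg[OF len, of "f+1"] nf
    by (simp add: Suc_diff_le)
  have b: "Pk (rev (map uminus P)) (n-f) = - Pk P (f+1)" using Pk_neg[OF len, of "n-f"] nf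
    by (simp add: Suc_diff_le)
  have c: "Pk (rev (map uminus P)) (2*f+1) = - Pk P (n-2*f)" using Pk_neg[OF len, of "2*f+1"] nf
    by (simp add: Suc_diff_le)
  have d: "Pk (rev (map uminus P)) (n-2*f) = - Pk P (2*f+1)" using Pk_neg[OF len, of "n-2*f"] nf
    by (simp add: Suc_diff_le)
  have m1: "min (-x) (- Pk P (n-2*f)) = - max x (Pk P (n-2*f))" by (simp add: min_def max_def)
  have m2: "max (-x) (- Pk P (2*f+1)) = - min x (Pk P (2*f+1))" by (simp add: min_def max_def)
  have cnd: "(- x \<le> - Pk P (n - f) \<or> - Pk P (f + 1) \<le> - x) = (x \<le> Pk P (f + 1) \<or> Pk P (n - f) \<le> x)"
    by auto
  show ?thesis unfolding algo_def a b c d m1 m2 cnd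
    by (simp add: field_simps)
qed

lemma cdest_neg:
  assumes nf: "5*f < n"
  shows "cdest n f (negp pos) look i k = - cdest n f pos look i k"
  unfolding cdest_def snapshot_neg using algo_neg[OF nf] snap_len
  by (simp add: negp_def)

lemma dest_at_neg:
  assumes nf: "5*f < n"
  shows "dest_at n f (negp pos) look cmp i t = - dest_at n f pos look cmp i t"
  unfolding dest_at_def using cdest_neg[OF nf] by (simp add: negp_def)

lemma corda_neg:
  assumes nf: "5*f < n" and ex: "corda_exec n f B \<delta> pos look cmp mend"
  shows "corda_exec n f B \<delta> (negp pos) look cmp mend"
  unfolding corda_exec_def
proof (intro ballI)
  fix i assume i: "i \<in> {..<n} - B"
  have R: "0 < \<delta> i \<and>
       0 \<le> look i 0 \<and>
       (\<forall>k. look i k \<le> cmp i k \<and> cmp i k \<le> mend i k \<and> mend i k \<le> look i (Suc k)) \<and>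
       (\<forall>T. \<exists>k. T < look i k) \<and>
       (\<forall>t. 0 \<le> t \<and> t \<le> cmp i 0 \<longrightarrow> pos i t = pos i 0) \<and>
       (\<forall>k t. mend i k \<le> t \<and> t \<le> cmp i (Suc k) \<longrightarrow> pos i t = pos i (mend i k)) \<and>
       (\<forall>k. let s = pos i (cmp i k); d = cdest n f pos look i k in
          (\<exists>lam :: real \<Rightarrow> real. mono_on {cmp i k..mend i k} lam \<and>
             (\<forall>t \<in> {cmp i k..mend i k}. 0 \<le> lam t \<and> lam t \<le> 1 \<and> pos i t = s + lam t * (d - s))) \<and>
          (pos i (mend i k) = d \<or> \<bar>pos i (mend i k) - s\<bar> \<ge> \<delta> i))"
    using bspec[OF ex[unfolded corda_exec_def] i] .
  have cd: "\<And>k. cdest n f (negp pos) look i k = - cdest n f pos look i k" using cdest_neg[OF nf] .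
  have np: "\<And>t. negp pos i t = - pos i t" by (simp add: negp_def)
  have L: "(\<forall>k. let s = negp pos i (cmp i k); d = cdest n f (negp pos) look i k in
          (\<exists>lam :: real \<Rightarrow> real. mono_on {cmp i k..mend i k} lam \<and>
             (\<forall>t \<in> {cmp i k..mend i k}. 0 \<le> lam t \<and> lam t \<le> 1 \<and> negp pos i t = s + lam t * (d - s))) \<and>
          (negp pos i (mend i k) = d \<or> \<bar>negp pos i (mend i k) - s\<bar> \<ge> \<delta> i))"
  proof
    fix k
    have Rk: "(\<exists>lam :: real \<Rightarrow> real. mono_on {cmp i k..mend i k} lam \<and>
             (\<forall>t \<in> {cmp i k..mend i k}. 0 \<le> lam t \<and> lam t \<le> 1 \<and>
              pos i t = pos i (cmp i k) + lam t * (cdest n f pos look i k - pos i (cmp i k)))) \<and>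
          (pos i (mend i k) = cdest n f pos look i k \<or>
           \<bar>pos i (mend i k) - pos i (cmp i k)\<bar> \<ge> \<delta> i)"
      using R[THEN conjunct2, THEN conjunct2, THEN conjunct2, THEN conjunct2, THEN conjunct2,
          THEN conjunct2, THEN spec[of _ k]] unfolding Let_def .
    then obtain lam :: "real \<Rightarrow> real" where mo: "mono_on {cmp i k..mend i k} lam"
      and lp: "\<forall>t \<in> {cmp i k..mend i k}. 0 \<le> lam t \<and> lam t \<le> 1 \<and>
              pos i t = pos i (cmp i k) + lam t * (cdest n f pos look i k - pos i (cmp i k))"
      by blast
    have lp': "\<forall>t \<in> {cmp i k..mend i k}. 0 \<le> lam t \<and> lam t \<le> 1 \<and>
       negp pos i t = negp pos i (cmp i k) + lam t * (cdest n f (negp pos) look i k - negp pos i (cmp i k))"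
    proof
      fix t assume "t \<in> {cmp i k..mend i k}"
      then have "0 \<le> lam t \<and> lam t \<le> 1 \<and>
              pos i t = pos i (cmp i k) + lam t * (cdest n f pos look i k - pos i (cmp i k))" using lp by blast
      then show "0 \<le> lam t \<and> lam t \<le> 1 \<and>
       negp pos i t = negp pos i (cmp i k) + lam t * (cdest n f (negp pos) look i k - negp pos i (cmp i k))"
        unfolding cd np by (simp add: algebra_simps)
    qed
    have en: "negp pos i (mend i k) = cdest n f (negp pos) look i k \<or>
           \<bar>negp pos i (mend i k) - negp pos i (cmp i k)\<bar> \<ge> \<delta> i"
    proof -
      have "\<bar>negp pos i (mend i k) - negp pos i (cmp i k)\<bar> = \<bar>pos i (mend i k) - pos i (cmp i k)\<bar>"
        unfolding np by (simp add: abs_minus_commute)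
      moreover have "(negp pos i (mend i k) = cdest n f (negp pos) look i k) = (pos i (mend i k) = cdest n f pos look i k)"
        unfolding cd np by simp
      ultimately show ?thesis using Rk by simp
    qed
    show "let s = negp pos i (cmp i k); d = cdest n f (negp pos) look i k in
          (\<exists>lam :: real \<Rightarrow> real. mono_on {cmp i k..mend i k} lam \<and>
             (\<forall>t \<in> {cmp i k..mend i k}. 0 \<le> lam t \<and> lam t \<le> 1 \<and> negp pos i t = s + lam t * (d - s))) \<and>
          (negp pos i (mend i k) = d \<or> \<bar>negp pos i (mend i k) - s\<bar> \<ge> \<delta> i)"
      unfolding Let_def using mo lp' en by blast
  qed
  have R1: "0 < \<delta> i" using R by (rule conjunct1)
  have R2: "0 \<le> look i 0" using R[THEN conjunct2] by (rule conjunct1)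
  have R3: "\<forall>k. look i k \<le> cmp i k \<and> cmp i k \<le> mend i k \<and> mend i k \<le> look i (Suc k)"
    using R[THEN conjunct2, THEN conjunct2] by (rule conjunct1)
  have R4: "\<forall>T. \<exists>k. T < look i k" using R[THEN conjunct2, THEN conjunct2, THEN conjunct2] by (rule conjunct1)
  have R5: "\<forall>t. 0 \<le> t \<and> t \<le> cmp i 0 \<longrightarrow> pos i t = pos i 0"
    using R[THEN conjunct2, THEN conjunct2, THEN conjunct2, THEN conjunct2] by (rule conjunct1)
  have R6: "\<forall>k t. mend i k \<le> t \<and> t \<le> cmp i (Suc k) \<longrightarrow> pos i t = pos i (mend i k)"
    using R[THEN conjunct2, THEN conjunct2, THEN conjunct2, THEN conjunct2, THEN conjunct2] by (rule conjunct1)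
  have P5: "\<forall>t. 0 \<le> t \<and> t \<le> cmp i 0 \<longrightarrow> negp pos i t = negp pos i 0"
  proof (intro allI impI)
    fix t assume "0 \<le> t \<and> t \<le> cmp i 0"
    then have "pos i t = pos i 0" using R5 by blast
    then show "negp pos i t = negp pos i 0" by (simp add: np)
  qed
  have P6: "\<forall>k t. mend i k \<le> t \<and> t \<le> cmp i (Suc k) \<longrightarrow> negp pos i t = negp pos i (mend i k)"
  proof (intro allI impI)
    fix k t assume "mend i k \<le> t \<and> t \<le> cmp i (Suc k)"
    then have "pos i t = pos i (mend i k)" using R6 by blast
    then show "negp pos i t = negp pos i (mend i k)" by (simp add: np)
  qed
  show "0 < \<delta> i \<and>
       0 \<le> look i 0 \<and>
       (\<forall>k. look i k \<le> cmp i k \<and> cmp i k \<le> mend i k \<and> mend i k \<le> look i (Suc k)) \<and>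
       (\<forall>T. \<exists>k. T < look i k) \<and>
       (\<forall>t. 0 \<le> t \<and> t \<le> cmp i 0 \<longrightarrow> negp pos i t = negp pos i 0) \<and>
       (\<forall>k t. mend i k \<le> t \<and> t \<le> cmp i (Suc k) \<longrightarrow> negp pos i t = negp pos i (mend i k)) \<and>
       (\<forall>k. let s = negp pos i (cmp i k); d = cdest n f (negp pos) look i k in
          (\<exists>lam :: real \<Rightarrow> real. mono_on {cmp i k..mend i k} lam \<and>
             (\<forall>t \<in> {cmp i k..mend i k}. 0 \<le> lam t \<and> lam t \<le> 1 \<and> negp pos i t = s + lam t * (d - s))) \<and>
          (negp pos i (mend i k) = d \<or> \<bar>negp pos i (mend i k) - s\<bar> \<ge> \<delta> i))"
    using R1 R2 R3 R4 P5 P6 L by (intro conjI) assumption+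
qed

context exe
begin

lemma neg_exe: "exe n f B \<delta> (negp pos) look cmp mend"
proof
  show "5 * f < n" by (rule nf)
  show "B \<subseteq> {..<n}" by (rule Bsub)
  show "card B \<le> f" by (rule cardB)
  show "corda_exec n f B \<delta> (negp pos) look cmp mend" by (rule corda_neg[OF nf ex])
qed

definition m :: "real \<Rightarrow> real" where
  "m t = Min ((\<lambda>i. lowv i t) ` C)"

lemma m_le: "i \<in> C \<Longrightarrow> m t \<le> lowv i t"
  unfolding m_def by simp

lemma m_att: "\<exists>i\<in>C. lowv i t = m t"
proof -
  have "m t \<in> (\<lambda>i. lowv i t) ` C" unfolding m_def using Cne by (intro Min_in) auto
  then show ?thesis by auto
qed

lemma m_ge: "(\<And>i. i \<in> C \<Longrightarrow> v \<le> lowv i t) \<Longrightarrow> v \<le> m t"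
  unfolding m_def using Cne by simp

lemma dest_lower:
  assumes i: "i \<in> C" and c: "card {j. j < n \<and> pos j (look i k) < y} \<le> 2*f"
  shows "min (pos i (look i k)) y \<le> dc i k"
proof -
  have "y \<le> Pk (snapshot n pos (look i k)) (2*f+1)" using R_ge[of f n pos "look i k" y] nf c by simp
  then have "min (pos i (look i k)) y \<le> min (pos i (look i k)) (Pk (snapshot n pos (look i k)) (2*f+1))"
    by (simp add: min_def)
  also have "\<dots> \<le> (pos i (look i k) + min (pos i (look i k)) (Pk (snapshot n pos (look i k)) (2*f+1)))/2"
    by (simp add: min_def)
  also have "\<dots> \<le> dc i k" unfolding cdest_eq by (rule algo_DE)
  finally show ?thesis .
qed

lemma gll:
  assumes s: "0 \<le> s" and c: "card {j \<in> C. lowv j s < y} \<le> f" and st: "s \<le> t" and i: "i \<in> C"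
  shows "min (lowv i s) y \<le> lowv i t"
proof (rule ginv[of C s "\<lambda>j. min (lowv j s) y" i t])
  show "C \<subseteq> C" by simp
  show "0 \<le> s" by (rule s)
  show "\<And>j. j \<in> C \<Longrightarrow> min (lowv j s) y \<le> lowv j s" by simp
  show "i \<in> C" by (rule i)
  show "s \<le> t" by (rule st)
  fix i' k assume i': "i' \<in> C" and "s < look i' k"
    and all: "\<And>j. j \<in> C \<Longrightarrow> min (lowv j s) y \<le> pos j (look i' k)"
  have "{j \<in> C. pos j (look i' k) < y} \<subseteq> {j \<in> C. lowv j s < y}"
  proof (intro subsetI)
    fix j assume "j \<in> {j \<in> C. pos j (look i' k) < y}"
    then have j: "j \<in> C" "pos j (look i' k) < y" by auto
    then have "min (lowv j s) y \<le> pos j (look i' k)" using all by simp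
    then show "j \<in> {j \<in> C. lowv j s < y}" using j by (auto simp: min_le_iff_disj)
  qed
  then have "card {j \<in> C. pos j (look i' k) < y} \<le> card {j \<in> C. lowv j s < y}"
    by (intro card_mono) auto
  then have "card {j \<in> C. pos j (look i' k) < y} \<le> f" using c by linarith
  then have "card {j. j < n \<and> pos j (look i' k) < y} \<le> 2*f"
    using cnt_byz[of "look i' k" y] by simp
  then have "min (pos i' (look i' k)) y \<le> dc i' k" by (rule dest_lower[OF i'])
  moreover have "min (lowv i' s) y \<le> pos i' (look i' k)" using all[OF i'] .
  ultimately show "min (lowv i' s) y \<le> dc i' k" by (auto simp: min_le_iff_disj)
qed

lemma m_mono:
  assumes T: "0 \<le> T" and tT: "T \<le> t" shows "m T \<le> m t"
proof (rule m_ge)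
  fix i assume i: "i \<in> C"
  have c: "card {j \<in> C. lowv j T < m T} \<le> f"
  proof -
    have nl: "\<not> lowv j T < m T" if "j \<in> C" for j using m_le[OF that, of T] by simp
    have e: "{j \<in> C. lowv j T < m T} = {}" using nl by blast
    show ?thesis unfolding e by simp
  qed
  show "m T \<le> lowv i t" using gll[OF T c tT i] m_le[OF i, of T] by simp
qed

end

lemma stabilize:
  fixes S :: "real \<Rightarrow> nat set" and C :: "nat set"
  assumes fin: "finite C" and sub: "\<And>t. T \<le> t \<Longrightarrow> S t \<subseteq> C"
    and nest: "\<And>t t'. T \<le> t \<Longrightarrow> t \<le> t' \<Longrightarrow> S t' \<subseteq> S t"
    and cq: "\<And>t. T \<le> t \<Longrightarrow> q \<le> card (S t)"
  shows "\<exists>T'\<ge>T. \<exists>S0. q \<le> card S0 \<and> (\<forall>t\<ge>T'. S t = S0)"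
proof -
  define c0 where "c0 = (LEAST c. \<exists>t\<ge>T. card (S t) = c)"
  have ex: "\<exists>c. \<exists>t\<ge>T. card (S t) = c" by (rule exI[of _ "card (S T)"]) (rule exI[of _ T], simp)
  have "\<exists>t\<ge>T. card (S t) = c0" unfolding c0_def by (rule LeastI_ex[OF ex])
  then obtain t0 where t0: "T \<le> t0" "card (S t0) = c0" by auto
  have mn: "c0 \<le> card (S t)" if "T \<le> t" for t unfolding c0_def
    by (rule Least_le) (rule exI[of _ t], simp add: that)
  have "S t = S t0" if "t0 \<le> t" for t
  proof -
    have "S t \<subseteq> S t0" using nest t0 that by simp
    moreover have "card (S t0) \<le> card (S t)" using mn[of t] t0 that by simp
    moreover have "finite (S t0)" using sub[OF t0(1)] fin by (rule finite_subset)
    ultimately have "card (S t) = card (S t0)" using card_mono[OF \<open>finite (S t0)\<close> \<open>S t \<subseteq> S t0\<close>] by linarith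
    then show ?thesis using card_subset_eq \<open>finite (S t0)\<close> \<open>S t \<subseteq> S t0\<close> by blast
  qed
  then have "\<forall>t\<ge>t0. S t = S t0" by blast
  then show ?thesis using t0(1) cq[OF t0(1)] by blast
qed

context exe
begin

abbreviation mN where "mN \<equiv> exe.m n f B (negp pos) look cmp"

lemma ub:
  assumes t: "0 \<le> t" and i: "i \<in> C" shows "pos i t \<le> - mN 0"
proof -
  interpret N: exe n f B \<delta> "negp pos" look cmp mend by (rule neg_exe)
  have "N.m 0 \<le> N.m t" using N.m_mono t by simp
  also have "\<dots> \<le> N.lowv i t" using N.m_le i by simp
  also have "\<dots> \<le> negp pos i t" by (rule N.lowv_pos)
  finally show ?thesis by (simp add: negp_def)
qed

lemma m_ub: "0 \<le> t \<Longrightarrow> m t \<le> - mN 0"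
proof -
  assume t: "0 \<le> t"
  obtain i where i: "i \<in> C" using Cne by auto
  have "m t \<le> lowv i t" using m_le[OF i] .
  also have "\<dots> \<le> pos i t" by (rule lowv_pos)
  also have "\<dots> \<le> - mN 0" using ub[OF t i] .
  finally show ?thesis .
qed

definition a0 :: real where "a0 = Sup (m ` {0..})"
definition Aset :: "real set" where "Aset = {y. \<exists>T\<ge>0. card {i\<in>C. lowv i T < y} \<le> f}"
definition a1 :: real where "a1 = Sup Aset"

lemma bdd_m: "bdd_above (m ` {0..})"
  using m_ub by (intro bdd_aboveI[of _ "- mN 0"]) auto

lemma m_le_a0: "0 \<le> t \<Longrightarrow> m t \<le> a0"
  unfolding a0_def using bdd_m by (intro cSup_upper) auto

lemma a0_approx: "0 < e \<Longrightarrow> \<exists>T\<ge>0. a0 - e < m T"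
proof -
  assume e: "0 < e"
  have "a0 - e < Sup (m ` {0..})" unfolding a0_def using e by simp
  then obtain y where "y \<in> m ` {0..}" "a0 - e < y"
    using less_cSup_iff[of "m ` {0..}" "a0 - e"] bdd_m by auto
  then show ?thesis by auto
qed

lemma a0_ev: "0 < e \<Longrightarrow> \<exists>T\<ge>0. \<forall>t\<ge>T. a0 - e < m t"
proof -
  assume "0 < e"
  then obtain T where T: "0 \<le> T" "a0 - e < m T" using a0_approx by blast
  have "a0 - e < m t" if "T \<le> t" for t using m_mono[OF T(1) that] T by simp
  then show ?thesis using T by blast
qed

lemma Aset_bdd: "bdd_above Aset"
proof (rule bdd_aboveI[of _ "- mN 0"])
  fix y assume "y \<in> Aset"
  then obtain T where T: "0 \<le> T" "card {i\<in>C. lowv i T < y} \<le> f" unfolding Aset_def by auto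
  have "\<exists>i\<in>C. \<not> lowv i T < y"
  proof (rule ccontr)
    assume "\<not> (\<exists>i\<in>C. \<not> lowv i T < y)"
    then have "{i\<in>C. lowv i T < y} = C" by auto
    then show False using T cardC4 by simp
  qed
  then obtain i where i: "i \<in> C" "y \<le> lowv i T" by auto
  show "y \<le> - mN 0" using i lowv_pos[of i T] ub[OF T(1) i(1)] by simp
qed

lemma mT_Aset: "0 \<le> T \<Longrightarrow> m T \<in> Aset"
proof -
  assume T: "0 \<le> T"
  have nl: "\<not> lowv j T < m T" if "j \<in> C" for j
  proof -
    have "m T \<le> lowv j T" by (rule m_le[OF that])
    then show ?thesis by simp
  qed
  have e: "{j \<in> C. lowv j T < m T} = {}" using nl by blast
  have c: "card {j\<in>C. lowv j T < m T} \<le> f" unfolding e by simp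
  show ?thesis unfolding Aset_def mem_Collect_eq using T c by blast
qed

lemma a0_le_a1: "a0 \<le> a1"
  unfolding a0_def a1_def
proof (rule cSup_least)
  show "m ` {0..} \<noteq> {}" by auto
  fix x assume "x \<in> m ` {0..}"
  then obtain T where "0 \<le> T" "x = m T" by auto
  then show "x \<le> Sup Aset" using mT_Aset Aset_bdd by (auto intro: cSup_upper)
qed

lemma K1:
  assumes y: "y < a1"
  shows "\<exists>T\<ge>0. \<forall>t\<ge>T. card {i\<in>C. lowv i t < y} \<le> f"
proof -
  have ne: "Aset \<noteq> {}" using mT_Aset[of 0] by auto
  obtain y0 where y0: "y0 \<in> Aset" "y < y0"
    using less_cSup_iff[OF ne Aset_bdd, of y] y unfolding a1_def by auto
  obtain T where T: "0 \<le> T" "card {i\<in>C. lowv i T < y0} \<le> f" using y0(1) unfolding Aset_def by auto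
  have "card {i\<in>C. lowv i t < y} \<le> f" if tT: "T \<le> t" for t
  proof -
    have "{i\<in>C. lowv i t < y} \<subseteq> {i\<in>C. lowv i T < y0}"
    proof (intro subsetI)
      fix i assume "i \<in> {i\<in>C. lowv i t < y}"
      then have i: "i \<in> C" "lowv i t < y" by auto
      have "min (lowv i T) y0 \<le> lowv i t" by (rule gll[OF T(1) T(2) tT i(1)])
      then show "i \<in> {i\<in>C. lowv i T < y0}" using i y0(2) by (auto simp: min_le_iff_disj)
    qed
    then have "card {i\<in>C. lowv i t < y} \<le> card {i\<in>C. lowv i T < y0}" by (intro card_mono) auto
    then show ?thesis using T(2) by linarith
  qed
  then show ?thesis using T(1) by blast
qed

lemma K2:
  assumes y: "a1 < y" and T: "0 \<le> T"
  shows "f < card {i\<in>C. lowv i T < y}"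
proof (rule ccontr)
  assume "\<not> f < card {i\<in>C. lowv i T < y}"
  then have "y \<in> Aset" unfolding Aset_def using T by auto
  then have "y \<le> a1" unfolding a1_def using Aset_bdd by (rule cSup_upper)
  then show False using y by simp
qed

lemma freeze:
  assumes S: "S \<subseteq> C" "S \<noteq> {}" and T: "0 \<le> T"
    and fr: "\<And>i k. i \<in> S \<Longrightarrow> T \<le> look i k \<Longrightarrow> dc i k = pos i (look i k)"
    and sep: "\<And>t i j. T \<le> t \<Longrightarrow> i \<in> S \<Longrightarrow> j \<in> C \<Longrightarrow> j \<notin> S \<Longrightarrow> lowv i t < lowv j t"
  shows "\<exists>i\<in>S. \<exists>k. T \<le> look i k \<and> card {j. j < n \<and> pos j (look i k) < pos i (look i k)} \<le> f"
proof -
  define ki where "ki = (\<lambda>i. LEAST k. T \<le> look i k)"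
  have kiT: "T \<le> look i (ki i)" if "i \<in> S" for i
  proof -
    have iC: "i \<in> C" using S(1) that by (rule subsetD)
    obtain k where "T < look i k" using unb[OF iC] by blast
    then show ?thesis unfolding ki_def by (rule LeastI[of _ k, OF less_imp_le])
  qed
  define p where "p = (\<lambda>i. pos i (look i (ki i)))"
  have frz: "pos i t = p i \<and> lowv i t = p i" if "i \<in> S" "cmp i (ki i) \<le> t" for i t
  proof -
    have iC: "i \<in> C" using S(1) that(1) by (rule subsetD)
    have "dc i k = pos i (look i k)" if "ki i \<le> k" for k
      using fr[OF \<open>i \<in> S\<close>] kiT[OF \<open>i \<in> S\<close>] lmono[OF iC that] by simp
    then show ?thesis unfolding p_def by (rule frozen[OF iC _ that(2)])
  qed
  define T' where "T' = Max (insert T ((\<lambda>i. cmp i (ki i)) ` S))"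
  have finS: "finite S" using S finite_subset finC by blast
  have T'ge: "T \<le> T'" "\<And>i. i \<in> S \<Longrightarrow> cmp i (ki i) \<le> T'"
    unfolding T'_def using finS by (auto intro: Max_ge)
  have "finite (p ` S)" "p ` S \<noteq> {}" using S finS by auto
  then have "Min (p ` S) \<in> p ` S" by (rule Min_in)
  then obtain i0 where i0: "i0 \<in> S" "p i0 = Min (p ` S)" by auto
  have i0min: "p i0 \<le> p i" if "i \<in> S" for i using i0 finS that by simp
  have i0C: "i0 \<in> C" using S(1) i0(1) by (rule subsetD)
  obtain k where k: "T' < look i0 k" using unb[OF i0C] by blast
  let ?l = "look i0 k"
  have lT: "T \<le> ?l" using k T'ge by simp
  have f0: "pos i0 ?l = p i0 \<and> lowv i0 ?l = p i0" using frz[OF i0(1)] T'ge(2)[OF i0(1)] k by simp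
  have "card {j. j < n \<and> pos j ?l < pos i0 ?l} \<le> f"
  proof (rule cnt_lowest)
    fix j assume j: "j < n" "pos j ?l < pos i0 ?l"
    show "j \<in> B"
    proof (rule ccontr)
      assume "j \<notin> B"
      then have jC: "j \<in> C" using j by simp
      show False
      proof (cases "j \<in> S")
        case True
        then have "pos j ?l = p j" using frz[OF True] T'ge(2)[OF True] k by simp
        then show False using i0min[OF True] j f0 by simp
      next
        case False
        have "lowv i0 ?l < lowv j ?l" using sep[OF lT i0(1) jC False] .
        then show False using j f0 lowv_pos[of j ?l] by simp
      qed
    qed
  qed
  then show ?thesis using i0(1) lT by blast
qed

end

context exe
begin

lemma deltam: "\<exists>dm>0. \<forall>i\<in>C. dm \<le> \<delta> i"
proof -
  have fin: "finite (\<delta> ` C)" "\<delta> ` C \<noteq> {}" using Cne by auto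
  have "0 < Min (\<delta> ` C)" using fin dpos by (auto simp: Min_gr_iff)
  moreover have "\<forall>i\<in>C. Min (\<delta> ` C) \<le> \<delta> i" using fin by simp
  ultimately show ?thesis by blast
qed

lemma pos_lt_count: "card {j\<in>C. pos j t < y} \<le> card {j\<in>C. lowv j t < y}"
proof (rule card_mono)
  show "finite {j\<in>C. lowv j t < y}" by simp
  show "{j\<in>C. pos j t < y} \<subseteq> {j\<in>C. lowv j t < y}" using lowv_pos[of _ t] by (auto intro: le_less_trans)
qed

lemma stepI: "a0 = a1"
proof (rule ccontr)
  assume "a0 \<noteq> a1"
  then have lt: "a0 < a1" using a0_le_a1 by simp
  define y where "y = (a0 + a1)/2"
  have ya: "a0 < y" "y < a1" unfolding y_def using lt by auto
  obtain T1 where T1: "0 \<le> T1" "\<And>t. T1 \<le> t \<Longrightarrow> card {i\<in>C. lowv i t < y} \<le> f"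
    using K1[OF ya(2)] by blast
  obtain dm where dm: "0 < dm" "\<And>i. i\<in>C \<Longrightarrow> dm \<le> \<delta> i" using deltam by blast
  define \<eta> where "\<eta> = min ((y - a0)/2) (dm/2)"
  have \<eta>12: "0 < \<eta>" "\<eta> < y - a0" "\<eta> < dm"
    unfolding \<eta>_def using ya dm by (auto simp: min_def)
  have \<eta>3: "\<eta> < \<delta> i" if "i\<in>C" for i using \<eta>12(3) dm(2)[OF that] by simp
  note \<eta> = \<eta>12(1,2) \<eta>3
  obtain T2 where T2: "0 \<le> T2" "\<And>t. T2 \<le> t \<Longrightarrow> a0 - \<eta> < m t" using a0_ev[OF \<eta>(1)] by blast
  have cC: "card {j\<in>C. pos j t < y} \<le> f" if "T1 \<le> t" for t
    using pos_lt_count[of t y] T1(2)[OF that] by linarith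
  have cnt2: "card {j. j<n \<and> pos j t < y} \<le> 2*f" if "T1 \<le> t" for t
    using cnt_byz[of t y] cC[OF that] by linarith
  have dl: "min (pos i (look i k)) y \<le> dc i k" if "i \<in> C" "T1 \<le> look i k" for i k
    by (rule dest_lower[OF that(1) cnt2[OF that(2)]])
  define Sf where "Sf = (\<lambda>t. {i\<in>C. lowv i t \<le> a0})"
  have nest: "Sf t' \<subseteq> Sf t" if "T1 \<le> t" "t \<le> t'" for t t'
  proof
    fix i assume "i \<in> Sf t'"
    then have i: "i \<in> C" "lowv i t' \<le> a0" unfolding Sf_def by auto
    have t0: "0 \<le> t" using T1(1) that by simp
    have "min (lowv i t) y \<le> lowv i t'" by (rule gll[OF t0 T1(2)[OF that(1)] that(2) i(1)])
    then have "lowv i t \<le> a0" using i ya by (auto simp: min_le_iff_disj)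
    then show "i \<in> Sf t" unfolding Sf_def using i by simp
  qed
  have ne: "1 \<le> card (Sf t)" if "T1 \<le> t" for t
  proof -
    obtain i where i: "i \<in> C" "lowv i t = m t" using m_att by blast
    have "m t \<le> a0" using m_le_a0 T1(1) that by simp
    then have "i \<in> Sf t" unfolding Sf_def using i by simp
    moreover have "finite (Sf t)" unfolding Sf_def by simp
    ultimately show ?thesis by (metis One_nat_def Suc_leI card_gt_0_iff empty_iff)
  qed
  have sub: "Sf t \<subseteq> C" for t unfolding Sf_def by auto
  have "\<exists>T'\<ge>T1. \<exists>S0. 1 \<le> card S0 \<and> (\<forall>t\<ge>T'. Sf t = S0)"
  proof (rule stabilize[of C T1 Sf 1])
    show "finite C" by simp
    show "\<And>t. T1 \<le> t \<Longrightarrow> Sf t \<subseteq> C" using sub by blast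
    show "\<And>t t'. T1 \<le> t \<Longrightarrow> t \<le> t' \<Longrightarrow> Sf t' \<subseteq> Sf t" by (rule nest)
    show "\<And>t. T1 \<le> t \<Longrightarrow> 1 \<le> card (Sf t)" by (rule ne)
  qed
  then obtain T3 S0 where T3: "T1 \<le> T3" "1 \<le> card S0" and SfS0: "\<forall>t\<ge>T3. Sf t = S0" by blast
  have SfS: "Sf t = S0" if "T3 \<le> t" for t using SfS0 that by blast
  have S0C: "S0 \<subseteq> C" using sub[of T3] SfS[of T3] by simp
  have S0ne: "S0 \<noteq> {}" using T3(2) by auto
  define T4 where "T4 = max T3 T2"
  have T4: "0 \<le> T4" "T3 \<le> T4" "T2 \<le> T4" "T1 \<le> T4" unfolding T4_def using T1 T2 T3 by auto
  have inS: "lowv i t \<le> a0" if "i \<in> S0" "T3 \<le> t" for i t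
    using that SfS[OF that(2)] unfolding Sf_def by auto
  have outS: "a0 < lowv j t" if "j \<in> C" "j \<notin> S0" "T3 \<le> t" for j t
    using that SfS[OF that(3)] unfolding Sf_def by auto
  have esc: "pos i (look i (Suc k)) \<le> a0" if iS: "i \<in> S0" and lk: "T4 \<le> look i k" for i k
  proof (rule ccontr)
    assume "\<not> pos i (look i (Suc k)) \<le> a0"
    then have xa: "a0 < pos i (look i (Suc k))" by simp
    have iC: "i \<in> C" using S0C iS by auto
    define v where "v = min (pos i (look i (Suc k))) y"
    have va: "a0 < v" unfolding v_def using xa ya by simp
    have vy: "v \<le> y" unfolding v_def by simp
    have cy: "v \<le> pos i (look i k') \<and> v \<le> dc i k'" if "Suc k \<le> k'" for k'
    proof (rule cyc_ind[OF iC, of v "Suc k" k'])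
      show "v \<le> pos i (look i (Suc k))" unfolding v_def by simp
      show "Suc k \<le> k'" by (rule that)
      fix k'' assume kk: "Suc k \<le> k''" and vx: "v \<le> pos i (look i k'')"
      have "look i k \<le> look i k''" using lmono[OF iC] kk by simp
      then have "T1 \<le> look i k''" using lk T4 by simp
      then have "min (pos i (look i k'')) y \<le> dc i k''" by (rule dl[OF iC])
      then show "v \<le> dc i k''" using vx vy by (auto simp: min_le_iff_disj)
    qed
    define tt where "tt = max (cmp i (Suc k)) T3"
    have "cmp i (Suc k) \<le> tt" unfolding tt_def by simp
    then have "v \<le> lowv i tt" using lowv_after[OF iC, of "Suc k" v tt] cy by blast
    moreover have "lowv i tt \<le> a0" using inS[OF iS] by (simp add: tt_def)
    ultimately show False using va by simp
  qed
  have late: "dc i k = pos i (look i k) \<and> f < card {j. j<n \<and> pos j (look i k) < pos i (look i k)}"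
    if iS: "i \<in> S0" and lk: "T4 \<le> look i k" for i k
  proof -
    have iC: "i \<in> C" using S0C iS by auto
    define l where "l = look i k"
    define x where "x = pos i l"
    have lT: "T1 \<le> l" "T2 \<le> l" "T3 \<le> l" using lk T4 unfolding l_def by auto
    have xlow: "a0 - \<eta> < x"
    proof -
      have "a0 - \<eta> < m l" using T2(2)[OF lT(2)] .
      also have "\<dots> \<le> lowv i l" by (rule m_le[OF iC])
      also have "\<dots> \<le> x" unfolding x_def by (rule lowv_pos)
      finally show ?thesis .
    qed
    have e1: "pos i (look i (Suc k)) \<le> a0" by (rule esc[OF iS lk])
    have nx: "min x (dc i k) \<le> pos i (look i (Suc k))" using next_x[OF iC, of k] unfolding x_def l_def by simp
    have xy: "x < y"
    proof (rule ccontr)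
      assume "\<not> x < y"
      then have "min x y = y" by simp
      then have "y \<le> dc i k" using dl[OF iC lT(1)[unfolded l_def]] unfolding x_def l_def by simp
      then have "y \<le> pos i (look i (Suc k))" using nx \<open>\<not> x < y\<close> by (auto simp: min_le_iff_disj)
      then show False using e1 ya by simp
    qed
    have nh: "card {j. j < n \<and> pos j l \<le> x} < n - f"
    proof -
      have u: "C = {j\<in>C. pos j l < y} \<union> {j\<in>C. y \<le> pos j l}" by auto
      have "card C \<le> card {j\<in>C. pos j l < y} + card {j\<in>C. y \<le> pos j l}"
        by (subst u) (rule card_Un_le)
      then have c1: "card C - f \<le> card {j\<in>C. y \<le> pos j l}" using cC[OF lT(1)] by linarith
      have "{j\<in>C. y \<le> pos j l} \<subseteq> {j\<in>C. x < pos j l}" using xy by auto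
      then have "card {j\<in>C. y \<le> pos j l} \<le> card {j\<in>C. x < pos j l}" by (intro card_mono) auto
      also have "\<dots> \<le> n - card {j. j < n \<and> pos j l \<le> x}" by (rule cnt_gt)
      finally have "card C - f \<le> n - card {j. j < n \<and> pos j l \<le> x}" using c1 by linarith
      moreover have "card C \<le> n" using cardC by simp
      ultimately show ?thesis using cardC4 by linarith
    qed
    have dce: "dc i k = algo n f (snapshot n pos l) x" unfolding l_def x_def by (rule cdest_eq)
    have nl: "f < card {j. j < n \<and> pos j l < x}"
    proof (rule ccontr)
      assume "\<not> f < card {j. j < n \<and> pos j l < x}"
      then have c: "card {j. j < n \<and> pos j l < x} \<le> f" by simp
      have db: "x \<le> dc i k \<and> (x + Pk (snapshot n pos l) (n-2*f))/2 \<le> dc i k"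
        using algo_DB[of f n pos l x] nf c dce by simp
      have "card {j. j<n \<and> pos j l < y} < n - 2*f" using cnt2[OF lT(1)] nf by linarith
      then have "y \<le> Pk (snapshot n pos l) (n-2*f)" using Q_ge[of f n pos l y] nf by simp
      then have dy: "(x + y)/2 \<le> dc i k" using db by simp
      have "min (dc i k) (x + \<delta> i) \<le> pos i (look i (Suc k))"
        using ascend[OF iC] db unfolding x_def l_def by simp
      moreover have "a0 < dc i k" using dy xlow \<eta>(2) by simp
      moreover have "a0 < x + \<delta> i" using xlow \<eta>(3)[OF iC] by simp
      ultimately show False using e1 by (auto simp: min_le_iff_disj)
    qed
    have "dc i k = x" using dce algo_DN[of f n pos l x] nf nl nh by simp
    then show ?thesis using nl unfolding x_def l_def by simp
  qed
  have "\<exists>i\<in>S0. \<exists>k. T4 \<le> look i k \<and> card {j. j < n \<and> pos j (look i k) < pos i (look i k)} \<le> f"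
  proof (rule freeze[OF S0C S0ne T4(1)])
    show "\<And>i k. i \<in> S0 \<Longrightarrow> T4 \<le> look i k \<Longrightarrow> dc i k = pos i (look i k)" using late by blast
    fix t i j assume "T4 \<le> t" "i \<in> S0" "j \<in> C" "j \<notin> S0"
    then show "lowv i t < lowv j t" using inS[of i t] outS[of j t] T4 by fastforce
  qed
  then show False using late by fastforce
qed

end

context exe
begin

lemma settle:
  assumes T1: "0 \<le> T1"
  shows "\<exists>T2\<ge>T1. \<forall>i\<in>C. \<forall>t\<ge>T2. 0 < Kc i t \<and> T1 \<le> look i (Kc i t - 1)"
proof -
  define ki where "ki = (\<lambda>i. SOME k. T1 < look i k)"
  have kiT: "T1 < look i (ki i)" if "i \<in> C" for i
    unfolding ki_def using unb[OF that] by (rule someI_ex)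
  define T2 where "T2 = Max (insert T1 ((\<lambda>i. cmp i (ki i)) ` C))"
  have T2: "T1 \<le> T2" "\<And>i. i \<in> C \<Longrightarrow> cmp i (ki i) \<le> T2" unfolding T2_def by auto
  have "0 < Kc i t \<and> T1 \<le> look i (Kc i t - 1)" if i: "i \<in> C" and t: "T2 \<le> t" for i t
  proof -
    have "cmp i (ki i) \<le> t" using T2(2)[OF i] t by simp
    then have "ki i < Kc i t" using Kc_iff[OF i] by simp
    then have "look i (ki i) \<le> look i (Kc i t - 1)" using lmono[OF i] by simp
    then show ?thesis using kiT[OF i] \<open>ki i < Kc i t\<close> by simp
  qed
  then show ?thesis using T2(1) by blast
qed

lemma xbound:
  assumes i: "i \<in> C" and low: "\<And>j. j \<in> C \<Longrightarrow> v \<le> pos j (look i k)"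
  shows "pos i (look i k) \<le> 2 * dc i k - v"
proof -
  let ?l = "look i k"
  have "card {j. j < n \<and> pos j ?l < v} \<le> f"
  proof (rule cnt_lowest)
    fix j assume "j < n" "pos j ?l < v"
    then show "j \<in> B" using low[of j] by (cases "j \<in> B") auto
  qed
  then have "card {j. j < n \<and> pos j ?l < v} \<le> 2*f" by simp
  then have "min (pos i ?l) v \<le> dc i k" by (rule dest_lower[OF i])
  have R: "v \<le> Pk (snapshot n pos ?l) (2*f+1)"
    using R_ge[of f n pos ?l v] nf \<open>card {j. j < n \<and> pos j ?l < v} \<le> 2*f\<close> by simp
  define M where "M = min (pos i ?l) (Pk (snapshot n pos ?l) (2*f+1))"
  have h1: "(pos i ?l + M)/2 \<le> dc i k"
    unfolding M_def cdest_eq by (rule algo_DE)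
  have h2: "v \<le> M" unfolding M_def using R low[OF i] by simp
  have h3: "pos i ?l + M \<le> 2 * dc i k" using h1 by simp
  have h4: "pos i ?l \<le> 2 * dc i k - M" using h3 by simp
  show ?thesis using h4 h2 by simp
qed

lemma cnt_ge2: "card {j \<in> C. v \<le> pos j t} \<le> n - card {j. j < n \<and> pos j t < v}"
proof -
  have d: "{j. j < n \<and> pos j t < v} \<inter> {j \<in> C. v \<le> pos j t} = {}" by auto
  have u: "{j. j < n \<and> pos j t < v} \<union> {j \<in> C. v \<le> pos j t} \<subseteq> {..<n}" by auto
  have "card {j. j < n \<and> pos j t < v} + card {j \<in> C. v \<le> pos j t}
      = card ({j. j < n \<and> pos j t < v} \<union> {j \<in> C. v \<le> pos j t})"
    using d by (intro card_Un_disjoint[symmetric]) auto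
  also have "\<dots> \<le> n" using card_mono[OF _ u] by simp
  finally show ?thesis by simp
qed

lemma low_ev:
  assumes e: "0 < e"
  shows "\<exists>T\<ge>0. \<forall>t\<ge>T. \<forall>i\<in>C. a1 - e < lowv i t"
proof -
  obtain T where T: "0 \<le> T" "\<And>t. T \<le> t \<Longrightarrow> a0 - e < m t" using a0_ev[OF e] by blast
  have "a1 - e < lowv i t" if "T \<le> t" "i \<in> C" for t i
    using T(2)[OF that(1)] m_le[OF that(2), of t] stepI by simp
  then show ?thesis using T(1) by blast
qed

lemma pos_low:
  assumes e: "0 < e"
  shows "\<exists>T\<ge>0. \<forall>t\<ge>T. \<forall>i\<in>C. lowv i t < a1 + e \<longrightarrow> pos i t < a1 + 3*e"
proof -
  obtain T1 where T1: "0 \<le> T1" "\<And>t i. T1 \<le> t \<Longrightarrow> i \<in> C \<Longrightarrow> a1 - e < lowv i t"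
    using low_ev[OF e] by blast
  have xb: "pos i (look i k) \<le> 2 * dc i k - (a1 - e)" if i: "i \<in> C" and lk: "T1 \<le> look i k" for i k
  proof (rule xbound[OF i])
    fix j assume j: "j \<in> C"
    show "a1 - e \<le> pos j (look i k)" using T1(2)[OF lk j] lowv_pos[of j "look i k"] by simp
  qed
  obtain T2 where T2: "T1 \<le> T2" "\<And>i t. i \<in> C \<Longrightarrow> T2 \<le> t \<Longrightarrow> 0 < Kc i t \<and> T1 \<le> look i (Kc i t - 1)"
    using settle[OF T1(1)] by blast
  have "pos i t < a1 + 3*e" if t: "T2 \<le> t" and i: "i \<in> C" and lw: "lowv i t < a1 + e" for t i
  proof -
    have t0: "0 \<le> t" using T1(1) T2(1) t by simp
    obtain K where K: "Kc i t = Suc K" and lK: "T1 \<le> look i K" using T2(2)[OF i t] by (cases "Kc i t") auto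
    have "pos i t < a1 + e \<or> dest_at n f pos look cmp i t < a1 + e \<or> pend i t < a1 + e"
      using lw unfolding lowv_def by (auto simp: min_less_iff_disj)
    moreover {
      assume "dest_at n f pos look cmp i t < a1 + e"
      then have d: "dc i K < a1 + e" using dest_at_Kc[OF i] K by simp
      have "pos i (look i K) \<le> 2 * dc i K - (a1 - e)" by (rule xb[OF i lK])
      then have "pos i (look i K) < a1 + 3 * e" using d by simp
      moreover have "pos i t \<le> max (pos i (look i K)) (dc i K)" using cur_span[OF i K] by simp
      ultimately have ?thesis using d e by (auto simp: le_max_iff_disj)
    }
    moreover {
      assume pe: "pend i t < a1 + e"
      have ?thesis
      proof (cases "look i (Kc i t) \<le> t")
        case True
        then have d: "dc i (Kc i t) < a1 + e" using pe unfolding pend_def by simp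
        have "look i K \<le> look i (Kc i t)" using lmono[OF i] K by simp
        then have "T1 \<le> look i (Kc i t)" using lK by simp
        then have "pos i (look i (Kc i t)) \<le> 2 * dc i (Kc i t) - (a1 - e)" by (rule xb[OF i])
        moreover have "pos i t = pos i (look i (Kc i t))" using pend_pos[OF i t0 True] .
        ultimately show ?thesis using d by simp
      next
        case False
        then show ?thesis using pe e unfolding pend_def by simp
      qed
    }
    ultimately show ?thesis using e by auto
  qed
  then show ?thesis using T1(1) T2(1) by (intro exI[of _ T2]) auto
qed

lemma side1:
  assumes e: "0 < e"
  shows "\<exists>T\<ge>0. \<forall>t\<ge>T. f < card {i\<in>C. pos i t < a1 + 3*e}"
proof -
  obtain T where T: "0 \<le> T" "\<And>t i. T \<le> t \<Longrightarrow> i \<in> C \<Longrightarrow> lowv i t < a1 + e \<Longrightarrow> pos i t < a1 + 3*e"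
    using pos_low[OF e] by blast
  have "f < card {i\<in>C. pos i t < a1 + 3*e}" if t: "T \<le> t" for t
  proof -
    have "f < card {i\<in>C. lowv i t < a1 + e}" using K2[of "a1 + e" t] e T(1) t by simp
    also have "\<dots> \<le> card {i\<in>C. pos i t < a1 + 3*e}" using T(2)[OF t] by (intro card_mono) auto
    finally show ?thesis .
  qed
  then show ?thesis using T(1) by blast
qed

lemma side2:
  assumes e: "0 < e" and dl: "\<And>i. i \<in> C \<Longrightarrow> 2*e < \<delta> i" and z: "a1 + 3*e \<le> z"
    and H: "\<exists>T\<ge>0. \<forall>t\<ge>T. f < card {i\<in>C. z < pos i t}"
  shows "\<exists>T\<ge>0. \<exists>SL. SL \<subseteq> C \<and> f < card SL \<and>
    (\<forall>t\<ge>T. \<forall>i\<in>SL. pos i t < a1 + e) \<and> (\<forall>t\<ge>T. \<forall>j\<in>C - SL. a1 + e \<le> pos j t) \<and>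
    (\<forall>T'. \<exists>l\<ge>T'. card {j\<in>C. a1 + 3*e \<le> pos j l} \<le> 2*f)"
proof -
  obtain T1 where T1: "0 \<le> T1" "\<And>t i. T1 \<le> t \<Longrightarrow> i \<in> C \<Longrightarrow> a1 - e < lowv i t"
    using low_ev[OF e] by blast
  obtain T2 where T2: "0 \<le> T2" "\<And>t i. T2 \<le> t \<Longrightarrow> i \<in> C \<Longrightarrow> lowv i t < a1 + e \<Longrightarrow> pos i t < a1 + 3*e"
    using pos_low[OF e] by blast
  obtain TH where TH: "0 \<le> TH" "\<And>t. TH \<le> t \<Longrightarrow> f < card {i\<in>C. z < pos i t}" using H by blast
  define T5 where "T5 = max T1 (max T2 TH)"
  have T5: "0 \<le> T5" "T1 \<le> T5" "T2 \<le> T5" "TH \<le> T5" unfolding T5_def using T1 by auto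
  have xb: "pos i (look i k) \<le> 2 * dc i k - (a1 - e)" if i: "i \<in> C" and lk: "T1 \<le> look i k" for i k
  proof (rule xbound[OF i])
    fix j assume j: "j \<in> C"
    show "a1 - e \<le> pos j (look i k)" using T1(2)[OF lk j] lowv_pos[of j "look i k"] by simp
  qed
  have nhA: "card {j. j < n \<and> pos j (look i k) \<le> pos i (look i k)} < n - f"
    if i: "i \<in> C" and lk: "T5 \<le> look i k" and xz: "pos i (look i k) < z" for i k
  proof -
    let ?l = "look i k"
    have "{j\<in>C. z < pos j ?l} \<subseteq> {j\<in>C. pos i ?l < pos j ?l}" using xz by auto
    then have "card {j\<in>C. z < pos j ?l} \<le> card {j\<in>C. pos i ?l < pos j ?l}" by (intro card_mono) auto
    also have "\<dots> \<le> n - card {j. j < n \<and> pos j ?l \<le> pos i ?l}" by (rule cnt_gt)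
    finally show ?thesis using TH(2)[of ?l] lk T5 by linarith
  qed
  have A: "pos i (look i k) \<le> dc i k" if i: "i \<in> C" and lk: "T5 \<le> look i k" and xz: "pos i (look i k) < z" for i k
    using algo_DC[of f n pos "look i k" "pos i (look i k)"] nf nhA[OF i lk xz] cdest_eq by simp
  have Cst: "a1 + e \<le> dc i k" if i: "i \<in> C" and lk: "T5 \<le> look i k" and xa: "a1 + e \<le> pos i (look i k)" for i k
  proof (cases "pos i (look i k) < a1 + 3*e")
    case True
    then have "pos i (look i k) < z" using z by simp
    then show ?thesis using A[OF i lk] xa by simp
  next
    case False
    have "pos i (look i k) \<le> 2 * dc i k - (a1 - e)" using xb[OF i] lk T5 by simp
    then show ?thesis using False by simp
  qed
  define Gl where "Gl = (\<lambda>t. {i\<in>C. lowv i t < a1 + e})"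
  have nest: "Gl t' \<subseteq> Gl t" if tt: "T5 \<le> t" "t \<le> t'" for t t'
  proof
    fix i assume "i \<in> Gl t'"
    then have i: "i \<in> C" "lowv i t' < a1 + e" unfolding Gl_def by auto
    show "i \<in> Gl t"
    proof (rule ccontr)
      assume "i \<notin> Gl t"
      then have lt: "a1 + e \<le> lowv i t" unfolding Gl_def using i by simp
      have "a1 + e \<le> lowv i t'"
      proof (rule ginv[of "{i}" t "\<lambda>_. a1 + e" i t'])
        show "{i} \<subseteq> C" using i by simp
        show "0 \<le> t" using T5 tt by simp
        show "\<And>j. j \<in> {i} \<Longrightarrow> a1 + e \<le> lowv j t" using lt by simp
        show "i \<in> {i}" by simp
        show "t \<le> t'" using tt by simp
        fix i' k assume "i' \<in> {i}" "t < look i' k" and al: "\<And>j. j \<in> {i} \<Longrightarrow> a1 + e \<le> pos j (look i' k)"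
        then have "i' = i" by simp
        then show "a1 + e \<le> dc i' k" using Cst[OF i(1), of k] al[of i] \<open>t < look i' k\<close> tt by simp
      qed
      then show False using i by simp
    qed
  qed
  have cq: "Suc f \<le> card (Gl t)" if "T5 \<le> t" for t
    using K2[of "a1 + e" t] e T5 that unfolding Gl_def by simp
  have "\<exists>T'\<ge>T5. \<exists>S0. Suc f \<le> card S0 \<and> (\<forall>t\<ge>T'. Gl t = S0)"
  proof (rule stabilize[of C T5 Gl "Suc f"])
    show "finite C" by simp
    show "\<And>t. T5 \<le> t \<Longrightarrow> Gl t \<subseteq> C" unfolding Gl_def by blast
    show "\<And>t t'. T5 \<le> t \<Longrightarrow> t \<le> t' \<Longrightarrow> Gl t' \<subseteq> Gl t" by (rule nest)
    show "\<And>t. T5 \<le> t \<Longrightarrow> Suc f \<le> card (Gl t)" by (rule cq)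
  qed
  then obtain T6 SL where T6: "T5 \<le> T6" "Suc f \<le> card SL" and GlS0: "\<forall>t\<ge>T6. Gl t = SL" by blast
  have GlS: "Gl t = SL" if "T6 \<le> t" for t using GlS0 that by blast
  have SLC: "SL \<subseteq> C" using GlS[of T6] unfolding Gl_def by auto
  have inS: "lowv i t < a1 + e" if "i \<in> SL" "T6 \<le> t" for i t
    using that GlS[OF that(2)] unfolding Gl_def by auto
  have outS: "a1 + e \<le> lowv j t" if "j \<in> C" "j \<notin> SL" "T6 \<le> t" for j t
    using that GlS[OF that(3)] unfolding Gl_def by auto
  have inS3: "pos i t < a1 + 3*e" if "i \<in> SL" "T6 \<le> t" for i t
    using T2(2)[of t i] inS[OF that] that SLC T5 T6 by auto
  have SLup: "pos i (look i k) \<le> dc i k" if i: "i \<in> SL" and lk: "T6 \<le> look i k" for i k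
  proof -
    have iC: "i \<in> C" using SLC i by auto
    have "pos i (look i k) < z" using inS3[OF i lk] z by simp
    then show ?thesis using A[OF iC] lk T6 by simp
  qed
  define ki where "ki = (\<lambda>i. SOME k. T6 < look i k)"
  have kiT: "T6 < look i (ki i)" if "i \<in> C" for i
    unfolding ki_def using unb[OF that] by (rule someI_ex)
  define T7 where "T7 = Max (insert T6 ((\<lambda>i. cmp i (ki i)) ` SL))"
  have finSL: "finite SL" using SLC finite_subset finC by blast
  have T7: "T6 \<le> T7" "\<And>i. i \<in> SL \<Longrightarrow> cmp i (ki i) \<le> T7" unfolding T7_def using finSL by auto
  have SLlow: "pos i t < a1 + e" if i: "i \<in> SL" and t: "T7 \<le> t" for i t
  proof -
    have iC: "i \<in> C" using SLC i by auto
    have up: "pos i (look i k) \<le> dc i k" if "ki i \<le> k" for k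
    proof -
      have "look i (ki i) \<le> look i k" using lmono[OF iC that] .
      then show ?thesis using SLup[OF i] kiT[OF iC] by simp
    qed
    have "cmp i (ki i) \<le> t" using T7(2)[OF i] t by simp
    then have "lowv i t = pos i t" using asc_only[OF iC, of "ki i" t] up by blast
    moreover have "lowv i t < a1 + e" using inS[of i t] i t T7(1) by simp
    ultimately show ?thesis by simp
  qed
  have SLhigh: "a1 + e \<le> pos j t" if "j \<in> C" "j \<notin> SL" "T7 \<le> t" for j t
    using outS[of j t] that T7 lowv_pos[of j t] by simp
  have BC: "\<exists>l\<ge>T'. card {j\<in>C. a1 + 3*e \<le> pos j l} \<le> 2*f" for T'
  proof (rule ccontr)
    assume nBC: "\<not> (\<exists>l\<ge>T'. card {j\<in>C. a1 + 3*e \<le> pos j l} \<le> 2*f)"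
    define T8 where "T8 = max T' T7"
    have T8: "T' \<le> T8" "T7 \<le> T8" "0 \<le> T8" unfolding T8_def using T7 T6 T5 by auto
    have late: "dc i k = pos i (look i k) \<and> f < card {j. j < n \<and> pos j (look i k) < pos i (look i k)}"
      if i: "i \<in> SL" and lk: "T8 \<le> look i k" for i k
    proof -
      have iC: "i \<in> C" using SLC i by auto
      define l where "l = look i k"
      define x where "x = pos i l"
      have dce: "dc i k = algo n f (snapshot n pos l) x" unfolding l_def x_def by (rule cdest_eq)
      have xz: "x < z" unfolding x_def l_def using inS3[of i "look i k"] i lk T8 T7(1) z by simp
      have nh: "card {j. j < n \<and> pos j l \<le> x} < n - f"
        unfolding x_def l_def using nhA[OF iC _ xz[unfolded x_def l_def]] lk T8 T7 T6 by simp
      have lT1: "T1 \<le> l" unfolding l_def using lk T8 T7(1) T6(1) T5(2) by simp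
      have xlow: "a1 - e < x" unfolding x_def using T1(2)[OF lT1 iC] lowv_pos[of i l] by simp
      have nl: "f < card {j. j < n \<and> pos j l < x}"
      proof (rule ccontr)
        assume "\<not> f < card {j. j < n \<and> pos j l < x}"
        then have c: "card {j. j < n \<and> pos j l < x} \<le> f" by simp
        have db: "x \<le> dc i k \<and> (x + Pk (snapshot n pos l) (n-2*f))/2 \<le> dc i k"
          using algo_DB[of f n pos l x] nf c dce by simp
        have "min (dc i k) (x + \<delta> i) \<le> pos i (look i (Suc k))"
          using ascend[OF iC] db unfolding x_def l_def by simp
        moreover have "pos i (look i (Suc k)) < a1 + e"
        proof -
          have "look i k \<le> look i (Suc k)" using lmono[OF iC] by simp
          then show ?thesis using SLlow[OF i] lk T8 by simp
        qed
        moreover have "a1 + e < x + \<delta> i" using xlow dl[OF iC] by simp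
        ultimately have dcl: "dc i k < a1 + e" by (auto simp: min_le_iff_disj)
        then have "Pk (snapshot n pos l) (n-2*f) < a1 + 3*e" using db xlow by simp
        then have "n - 2*f \<le> card {j. j < n \<and> pos j l < a1 + 3*e}" using Q_lt[of f n pos l] nf by simp
        then have "card {j\<in>C. a1 + 3*e \<le> pos j l} \<le> 2*f" using cnt_ge2[of "a1 + 3*e" l] by linarith
        moreover have "T' \<le> l" unfolding l_def using lk T8 by simp
        ultimately show False using nBC by blast
      qed
      have "dc i k = x" using dce algo_DN[of f n pos l x] nf nl nh by simp
      then show ?thesis using nl unfolding x_def l_def by simp
    qed
    have SLne: "SL \<noteq> {}" using T6(2) by auto
    have "\<exists>i\<in>SL. \<exists>k. T8 \<le> look i k \<and> card {j. j < n \<and> pos j (look i k) < pos i (look i k)} \<le> f"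
    proof (rule freeze[OF SLC SLne T8(3)])
      show "\<And>i k. i \<in> SL \<Longrightarrow> T8 \<le> look i k \<Longrightarrow> dc i k = pos i (look i k)" using late by blast
      fix t i j assume "T8 \<le> t" "i \<in> SL" "j \<in> C" "j \<notin> SL"
      then show "lowv i t < lowv j t" using inS[of i t] outS[of j t] T8 T7 by fastforce
    qed
    then show False using late by fastforce
  qed
  have "0 \<le> T7" using T7 T6 T5 by simp
  moreover have "f < card SL" using T6 by simp
  moreover have P1: "\<forall>t\<ge>T7. \<forall>i\<in>SL. pos i t < a1 + e" using SLlow by blast
  moreover have P2: "\<forall>t\<ge>T7. \<forall>j\<in>C - SL. a1 + e \<le> pos j t" using SLhigh by blast
  moreover have P3: "\<forall>T'. \<exists>l\<ge>T'. card {j\<in>C. a1 + 3*e \<le> pos j l} \<le> 2*f" using BC by blast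
  ultimately have "0 \<le> T7 \<and> (SL \<subseteq> C \<and> f < card SL \<and>
    (\<forall>t\<ge>T7. \<forall>i\<in>SL. pos i t < a1 + e) \<and> (\<forall>t\<ge>T7. \<forall>j\<in>C - SL. a1 + e \<le> pos j t) \<and>
    (\<forall>T'. \<exists>l\<ge>T'. card {j\<in>C. a1 + 3*e \<le> pos j l} \<le> 2*f))" using SLC by (intro conjI)
  then show ?thesis by (intro exI[of _ T7]) (intro conjI, simp, rule exI[of _ SL], simp)
qed

end

context exe
begin

lemma ab_eq: "a1 = - exe.a1 n f B (negp pos) look cmp"
proof -
  interpret N: exe n f B \<delta> "negp pos" look cmp mend by (rule neg_exe)
  have np: "\<And>i t. negp pos i t = - pos i t" by (simp add: negp_def)
  have mm: "m t \<le> - N.m t" for t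
  proof -
    obtain i where i: "i \<in> C" using Cne by auto
    have "m t \<le> pos i t" using m_le[OF i, of t] lowv_pos[of i t] by simp
    moreover have "N.m t \<le> negp pos i t" using N.m_le[OF i, of t] N.lowv_pos[of i t] by simp
    ultimately show ?thesis using np by simp
  qed
  have le: "a1 \<le> - N.a1"
  proof (rule ccontr)
    assume "\<not> a1 \<le> - N.a1"
    define e where "e = (a1 + N.a1)/2"
    have e: "0 < e" using \<open>\<not> a1 \<le> - N.a1\<close> unfolding e_def by simp
    obtain T1 where T1: "0 \<le> T1" "\<And>t. T1 \<le> t \<Longrightarrow> a0 - e < m t" using a0_ev[OF e] by blast
    obtain T2 where T2: "0 \<le> T2" "\<And>t. T2 \<le> t \<Longrightarrow> N.a0 - e < N.m t" using N.a0_ev[OF e] by blast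
    have "a0 - e < m (max T1 T2)" "N.a0 - e < N.m (max T1 T2)" using T1 T2 by auto
    then have h1: "a0 - e < m (max T1 T2)" and h2: "N.a0 - e < N.m (max T1 T2)" by auto
    have h3: "m (max T1 T2) \<le> - N.m (max T1 T2)" by (rule mm)
    have h4: "a0 - e < - N.m (max T1 T2)" using h1 h3 by (rule less_le_trans)
    have h5: "a0 - e + (N.a0 - e) < 0" using h4 h2 by linarith
    have "a0 - e + (N.a0 - e) = 0" unfolding e_def using stepI N.stepI by (simp add: field_simps)
    then show False using h5 by simp
  qed
  show ?thesis
  proof (rule ccontr)
    assume "a1 \<noteq> - N.a1"
    then have lt: "a1 < - N.a1" using le by simp
    define b1 where "b1 = - N.a1"
    define L where "L = b1 - a1"
    have L: "0 < L" unfolding L_def b1_def using lt by simp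
    obtain dm where dm: "0 < dm" "\<And>i. i\<in>C \<Longrightarrow> dm \<le> \<delta> i" using deltam by blast
    define e where "e = min (L/8) (dm/4)"
    have e: "0 < e" "8*e \<le> L" "e \<le> dm/4" unfolding e_def using L dm by (auto simp: min_def)
    have dl: "2*e < \<delta> i" if "i \<in> C" for i using e dm(1) dm(2)[OF that] by simp
    obtain Tp1 where Tp1: "0 \<le> Tp1" "\<And>t. Tp1 \<le> t \<Longrightarrow> f < card {i\<in>C. pos i t < a1 + 3*e}"
      using side1[OF e(1)] by blast
    obtain Tn1 where Tn1: "0 \<le> Tn1" "\<And>t. Tn1 \<le> t \<Longrightarrow> f < card {i\<in>C. negp pos i t < N.a1 + 3*e}"
      using N.side1[OF e(1)] by blast
    have Hp: "\<exists>T\<ge>0. \<forall>t\<ge>T. f < card {i\<in>C. b1 - 3*e < pos i t}"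
    proof -
      have "{i\<in>C. negp pos i t < N.a1 + 3*e} = {i\<in>C. b1 - 3*e < pos i t}" for t
        unfolding np b1_def by auto
      then show ?thesis using Tn1 by auto
    qed
    have Hn: "\<exists>T\<ge>0. \<forall>t\<ge>T. f < card {i\<in>C. - (a1 + 3*e) < negp pos i t}"
    proof -
      have "{i\<in>C. - (a1 + 3*e) < negp pos i t} = {i\<in>C. pos i t < a1 + 3*e}" for t
        unfolding np by auto
      then show ?thesis using Tp1 by auto
    qed
    have zp: "a1 + 3*e \<le> b1 - 3*e" using e unfolding L_def by simp
    have zn: "N.a1 + 3*e \<le> - (a1 + 3*e)" using e unfolding L_def b1_def by simp
    obtain Tp SL where Tp: "0 \<le> Tp" and SLC: "SL \<subseteq> C" and SLc: "f < card SL"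
      and SLlow: "\<forall>t\<ge>Tp. \<forall>i\<in>SL. pos i t < a1 + e"
      and SLhi: "\<forall>t\<ge>Tp. \<forall>j\<in>C - SL. a1 + e \<le> pos j t"
      and BC: "\<forall>T'. \<exists>l\<ge>T'. card {j\<in>C. a1 + 3*e \<le> pos j l} \<le> 2*f"
      using side2[OF e(1) dl zp Hp] by blast
    obtain Tn SH where Tn: "0 \<le> Tn" and SHC: "SH \<subseteq> C" and SHc: "f < card SH"
      and SHlow: "\<forall>t\<ge>Tn. \<forall>i\<in>SH. negp pos i t < N.a1 + e"
      and SHhi: "\<forall>t\<ge>Tn. \<forall>j\<in>C - SH. N.a1 + e \<le> negp pos j t"
      and TC: "\<forall>T'. \<exists>l\<ge>T'. card {j\<in>C. N.a1 + 3*e \<le> negp pos j l} \<le> 2*f"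
      using N.side2[OF e(1) dl zn Hn] by blast
    have SHpos: "b1 - e < pos i t" if "Tn \<le> t" "i \<in> SH" for i t
      using SHlow that unfolding np b1_def by force
    have nSHpos: "pos j t \<le> b1 - e" if "Tn \<le> t" "j \<in> C" "j \<notin> SH" for j t
      using SHhi that unfolding np b1_def by force
    have SLpos: "pos i t < a1 + e" if "Tp \<le> t" "i \<in> SL" for i t
      using SLlow that by blast
    have nSLpos: "a1 + e \<le> pos j t" if "Tp \<le> t" "j \<in> C" "j \<notin> SL" for j t
      using SLhi that by blast
    define Tm where "Tm = max Tp Tn"
    have Tm: "0 \<le> Tm" "Tp \<le> Tm" "Tn \<le> Tm" unfolding Tm_def using Tp by auto
    define Mid where "Mid = C - SL - SH"
    have midfix: "dc j k = pos j (look j k)" if j: "j \<in> Mid" and lk: "Tm \<le> look j k" for j k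
    proof -
      have jC: "j \<in> C" "j \<notin> SL" "j \<notin> SH" using j unfolding Mid_def by auto
      define l where "l = look j k"
      define x where "x = pos j l"
      have lT: "Tp \<le> l" "Tn \<le> l" using lk Tm unfolding l_def by auto
      have "SL \<subseteq> {j'\<in>C. pos j' l < x}"
        using SLpos[OF lT(1)] nSLpos[OF lT(1) jC(1) jC(2)] SLC unfolding x_def by force
      then have "card SL \<le> card {j'\<in>C. pos j' l < x}" by (intro card_mono) auto
      also have "\<dots> \<le> card {j'. j' < n \<and> pos j' l < x}" by (rule cnt_corr)
      finally have nl: "f < card {j'. j' < n \<and> pos j' l < x}" using SLc by simp
      have "SH \<subseteq> {j'\<in>C. x < pos j' l}"
        using SHpos[OF lT(2)] nSHpos[OF lT(2) jC(1) jC(3)] SHC unfolding x_def by force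
      then have "card SH \<le> card {j'\<in>C. x < pos j' l}" by (intro card_mono) auto
      also have "\<dots> \<le> n - card {j'. j' < n \<and> pos j' l \<le> x}" by (rule cnt_gt)
      finally have nh: "card {j'. j' < n \<and> pos j' l \<le> x} < n - f" using SHc by linarith
      have "dc j k = algo n f (snapshot n pos l) x" unfolding l_def x_def by (rule cdest_eq)
      also have "\<dots> = x" using algo_DN[of f n pos l x] nf nl nh by simp
      finally show ?thesis unfolding x_def l_def .
    qed
    have MidC: "Mid \<subseteq> C" unfolding Mid_def by auto
    define kj where "kj = (\<lambda>j. SOME k. Tm < look j k)"
    have kjT: "Tm < look j (kj j)" if "j \<in> C" for j
      unfolding kj_def using unb[OF that] by (rule someI_ex)
    define p where "p = (\<lambda>j. pos j (look j (kj j)))"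
    have finMid: "finite Mid" using MidC finite_subset finC by blast
    define Tf where "Tf = Max (insert Tm ((\<lambda>j. cmp j (kj j)) ` Mid))"
    have Tf: "Tm \<le> Tf" "\<And>j. j \<in> Mid \<Longrightarrow> cmp j (kj j) \<le> Tf" unfolding Tf_def using finMid by auto
    have frz: "pos j t = p j" if j: "j \<in> Mid" and t: "Tf \<le> t" for j t
    proof -
      have jC: "j \<in> C" using MidC j by auto
      have fr: "dc j k = pos j (look j k)" if "kj j \<le> k" for k
      proof -
        have "look j (kj j) \<le> look j k" using lmono[OF jC that] .
        then show ?thesis using midfix[OF j] kjT[OF jC] by simp
      qed
      have "cmp j (kj j) \<le> t" using Tf(2)[OF j] t by simp
      then show ?thesis unfolding p_def using frozen[OF jC, of "kj j" t] fr by blast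
    qed
    define Ns where "Ns = (\<lambda>t. {i\<in>C. pos i t < a1 + 3*e})"
    have Nchar: "Ns t = SL \<union> {j\<in>Mid. p j < a1 + 3*e}" if t: "Tf \<le> t" for t
    proof -
      have tp: "Tp \<le> t" "Tn \<le> t" using t Tf Tm by auto
      show ?thesis
      proof (intro set_eqI iffI)
        fix i assume "i \<in> Ns t"
        then have i: "i \<in> C" "pos i t < a1 + 3*e" unfolding Ns_def by auto
        have "i \<notin> SH \<or> i \<in> SL"
        proof (rule ccontr)
          assume "\<not> (i \<notin> SH \<or> i \<in> SL)"
          then have "i \<in> SH" by simp
          then have "b1 - e < pos i t" using SHpos[OF tp(2)] by simp
          then show False using i zp e by simp
        qed
        then show "i \<in> SL \<union> {j\<in>Mid. p j < a1 + 3*e}"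
          using i frz[of i t] t unfolding Mid_def by auto
      next
        fix i assume "i \<in> SL \<union> {j\<in>Mid. p j < a1 + 3*e}"
        then show "i \<in> Ns t"
        proof
          assume "i \<in> SL"
          then show "i \<in> Ns t" using SLpos[OF tp(1)] SLC e unfolding Ns_def by force
        next
          assume "i \<in> {j\<in>Mid. p j < a1 + 3*e}"
          then show "i \<in> Ns t" using frz[of i t] t MidC unfolding Ns_def by auto
        qed
      qed
    qed
    obtain l1 where l1: "Tf \<le> l1" "card {j\<in>C. a1 + 3*e \<le> pos j l1} \<le> 2*f" using BC by blast
    obtain l2 where l2: "Tf \<le> l2" "card {j\<in>C. N.a1 + 3*e \<le> negp pos j l2} \<le> 2*f" using TC by blast
    have c1: "card C \<le> card (Ns l1) + 2*f"
    proof -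
      have u: "C = Ns l1 \<union> {j\<in>C. a1 + 3*e \<le> pos j l1}" unfolding Ns_def by auto
      have "card C \<le> card (Ns l1) + card {j\<in>C. a1 + 3*e \<le> pos j l1}"
        by (subst u) (rule card_Un_le)
      then show ?thesis using l1(2) by linarith
    qed
    have c2: "card (Ns l2) \<le> 2*f"
    proof -
      have "Ns l2 \<subseteq> {j\<in>C. N.a1 + 3*e \<le> negp pos j l2}"
      proof
        fix j assume "j \<in> Ns l2"
        then have j: "j \<in> C" "pos j l2 < a1 + 3*e" unfolding Ns_def by auto
        have "N.a1 + 3*e \<le> - pos j l2" using j(2) zp unfolding b1_def by simp
        then show "j \<in> {j\<in>C. N.a1 + 3*e \<le> negp pos j l2}" using j(1) np[of j l2] by simp
      qed
      then have "card (Ns l2) \<le> card {j\<in>C. N.a1 + 3*e \<le> negp pos j l2}" by (intro card_mono) auto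
      then show ?thesis using l2(2) by linarith
    qed
    have "Ns l1 = Ns l2" using Nchar[OF l1(1)] Nchar[OF l2(1)] by simp
    then show False using c1 c2 cardC4 by simp
  qed
qed

lemma main_conv:
  assumes e: "0 < e"
  shows "\<exists>T\<ge>0. \<forall>t\<ge>T. - mN t - m t < e"
proof -
  interpret N: exe n f B \<delta> "negp pos" look cmp mend by (rule neg_exe)
  have e2: "0 < e/2" using e by simp
  obtain T1 where T1: "0 \<le> T1" "\<And>t. T1 \<le> t \<Longrightarrow> a0 - e/2 < m t" using a0_ev[OF e2] by blast
  obtain T2 where T2: "0 \<le> T2" "\<And>t. T2 \<le> t \<Longrightarrow> N.a0 - e/2 < N.m t" using N.a0_ev[OF e2] by blast
  have "- N.m t - m t < e" if "max T1 T2 \<le> t" for t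
    using T1(2)[of t] T2(2)[of t] that stepI N.stepI ab_eq by simp
  then show ?thesis using T1(1) by (intro exI[of _ "max T1 T2"]) auto
qed

end

context exe
begin

lemma diam_bound: "diamUD n f B pos look cmp t \<le> - mN t - m t"
proof -
  interpret N: exe n f B \<delta> "negp pos" look cmp mend by (rule neg_exe)
  define S where "S = set_mset (U_ms n B pos t + D_ms n f B pos look cmp t)"
  have Seq: "S = (\<lambda>i. pos i t) ` C \<union> (\<lambda>i. dest_at n f pos look cmp i t) ` C"
    unfolding S_def U_ms_def D_ms_def by simp
  have fin: "finite S" unfolding Seq by simp
  have ne: "S \<noteq> {}" unfolding Seq using Cne by simp
  have up: "v \<le> - N.m t" if "v \<in> S" for v
  proof -
    from that obtain i where i: "i \<in> C" and v: "v = pos i t \<or> v = dest_at n f pos look cmp i t"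
      unfolding Seq by auto
    have "N.m t \<le> N.lowv i t" by (rule N.m_le[OF i])
    moreover have "N.lowv i t \<le> negp pos i t" by (rule N.lowv_pos)
    moreover have "N.lowv i t \<le> dest_at n f (negp pos) look cmp i t" by (rule N.lowv_dest)
    moreover have "dest_at n f (negp pos) look cmp i t = - dest_at n f pos look cmp i t"
      by (rule dest_at_neg[OF nf])
    ultimately show ?thesis using v by (auto simp: negp_def)
  qed
  have lo: "m t \<le> v" if "v \<in> S" for v
  proof -
    from that obtain i where i: "i \<in> C" and v: "v = pos i t \<or> v = dest_at n f pos look cmp i t"
      unfolding Seq by auto
    have "m t \<le> lowv i t" by (rule m_le[OF i])
    then show ?thesis using v lowv_pos[of i t] lowv_dest[of i t] by auto
  qed
  have "Max S \<le> - N.m t" using fin ne up by simp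
  moreover have "m t \<le> Min S" using fin ne lo by simp
  ultimately show ?thesis unfolding diamUD_def diam_def S_def[symmetric] by simp
qed

end

theorem lemma14:
  fixes n f :: nat and B :: "nat set" and \<delta> :: "nat \<Rightarrow> real"
    and pos :: "nat \<Rightarrow> real \<Rightarrow> real" and look cmp mend :: "nat \<Rightarrow> nat \<Rightarrow> real"
  assumes "5 * f < n"
    and "B \<subseteq> {..<n}" and "card B \<le> f"
    and "corda_exec n f B \<delta> pos look cmp mend"
  shows "\<exists>\<alpha>::real. 0 < \<alpha> \<and> \<alpha> < 1 \<and>
           (\<forall>t \<ge> 0. diamUD n f B pos look cmp t > 0 \<longrightarrow>
              (\<exists>t' > t. diamUD n f B pos look cmp t' < \<alpha> * diamUD n f B pos look cmp t))"
proof -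
  interpret E: exe n f B \<delta> pos look cmp mend
    using assms by (unfold_locales) auto
  have "\<exists>t' > t. diamUD n f B pos look cmp t' < (1/2) * diamUD n f B pos look cmp t"
    if t: "0 \<le> t" and d: "0 < diamUD n f B pos look cmp t" for t
  proof -
    have d2: "0 < diamUD n f B pos look cmp t / 2" using d by simp
    obtain T where T: "0 \<le> T" "\<forall>t'\<ge>T. - E.mN t' - E.m t' < diamUD n f B pos look cmp t / 2"
      using E.main_conv[OF d2] by blast
    define t' where "t' = max T (t + 1)"
    have "t < t'" unfolding t'_def by simp
    moreover have "diamUD n f B pos look cmp t' < (1/2) * diamUD n f B pos look cmp t"
    proof -
      have "diamUD n f B pos look cmp t' \<le> - E.mN t' - E.m t'" by (rule E.diam_bound)
      also have "\<dots> < diamUD n f B pos look cmp t / 2" using T(2) unfolding t'_def by simp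
      finally show ?thesis by simp
    qed
    ultimately show ?thesis by blast
  qed
  then show ?thesis by (intro exI[of _ "1/2"]) auto
qed

end
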